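(* Let $N\ge1$. The closure of $\Phi'_N$ in $\mathrm{PSL}_2(\hat{\mathbb{Z}}_{\mathrm{odd}})$ is $\mathrm{PSL}_2(\hat{\mathbb{Z}}_{\mathrm{odd}})$ if $3$ does not divide $N$, and is $\hat D_{\mathrm{odd}}$ if $3$ divides $N$.
   Context: $\bar\Gamma(2)=\Gamma(2)/\{\pm1\}\subset\mathrm{PSL}_2(\mathbb{Z})$, freely generated by the classes $A$ of $\begin{pmatrix}1&2\\0&1\end{pmatrix}$ and $B$ of $\begin{pmatrix}1&0\\2&1\end{pmatrix}$. Let $N'=N$ if $N$ is odd, $N'=N/2$ if $N$ is even. Let $H_{N,N,N'}$ be the group generated by $x,y$ with $z=xyx^{-1}y^{-1}$ central and $x^N=y^N=z^{N'}=1$; $\Phi'_N$ is the kernel of the homomorphism $\bar\Gamma(2)\to H_{N,N,N'}$ with $A\mapsto x$, $B\mapsto y$. Let $\hat{\mathbb{Z}}_{\mathrm{odd}}=\prod_{p\ne2}\mathbb{Z}_p$, with $\mathrm{PSL}_2(\mathbb{Z})\subset\mathrm{PSL}_2(\hat{\mathbb{Z}}_{\mathrm{odd}})$ and the profinite topology. $\hat D_{\mathrm{odd}}$ is the inverse image in $\mathrm{PSL}_2(\hat{\mathbb{Z}}_{\mathrm{odd}})$, under reduction mod $3$, of the Klein four-subgroup $D_3\subset\mathrm{PSL}_2(\mathbb{Z}/3\mathbb{Z})$ consisting of the classes of $\pm I$, $\pm\begin{pmatrix}0&-1\\1&0\end{pmatrix}$, $\pm\begin{pmatrix}-1&1\\1&1\end{pmatrix}$,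 $\pm\begin{pmatrix}1&1\\1&-1\end{pmatrix}$. *)

theory Defs
  imports "HOL-Analysis.Analysis"
begin

text \<open>A matrix (a b; c d) is represented by the tuple (a, b, c, d).\<close>
type_synonym mat = "int \<times> int \<times> int \<times> int"

fun mmul :: "mat \<Rightarrow> mat \<Rightarrow> mat" where
  "mmul (a, b, c, d) (a', b', c', d') =
     (a*a' + b*c', a*b' + b*d', c*a' + d*c', c*b' + d*d')"

fun mdet :: "mat \<Rightarrow> int" where
  "mdet (a, b, c, d) = a*d - b*c"

text \<open>Inverse of a determinant-one matrix.\<close>
fun minv :: "mat \<Rightarrow> mat" where
  "minv (a, b, c, d) = (d, -b, -c, a)"

fun mneg :: "mat \<Rightarrow> mat" where
  "mneg (a, b, c, d) = (-a, -b, -c, -d)"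

definition mI :: mat where "mI = (1, 0, 0, 1)"

fun mpow :: "mat \<Rightarrow> nat \<Rightarrow> mat" where
  "mpow M 0 = mI"
| "mpow M (Suc n) = mmul M (mpow M n)"

fun mred :: "nat \<Rightarrow> mat \<Rightarrow> mat" where
  "mred m (a, b, c, d) = (a mod int m, b mod int m, c mod int m, d mod int m)"

definition SL2Z :: "mat set" where
  "SL2Z = {M. mdet M = 1}"

text \<open>Principal congruence subgroup Gamma(2) (contains -I).\<close>
definition Gamma2 :: "mat set" where
  "Gamma2 = {M. M \<in> SL2Z \<and> mred 2 M = mI}"

text \<open>Elements of PSL_2(Z) are the classes {M, -M}.\<close>
definition psl_class :: "mat \<Rightarrow> mat set" where
  "psl_class M = {M, mneg M}"

definition matA :: mat where "matA = (1, 2, 0, 1)"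
definition matB :: mat where "matB = (1, 0, 2, 1)"

definition commut :: "mat \<Rightarrow> mat \<Rightarrow> mat" where
  "commut X Y = mmul (mmul X Y) (mmul (minv X) (minv Y))"

definition Nprime :: "nat \<Rightarrow> nat" where
  "Nprime N = (if odd N then N else N div 2)"

text \<open>Images in Gamma(2) of the defining relators of H_{N,N,N'}:
  x^N, y^N, z^{N'}, [z,x], [z,y] with z = [x,y].\<close>
definition relators :: "nat \<Rightarrow> mat set" where
  "relators N = {mpow matA N, mpow matB N, mpow (commut matA matB) (Nprime N),
                 commut (commut matA matB) matA, commut (commut matA matB) matB}"

text \<open>Since bar-Gamma(2) is free on A, B, the kernel of bar-Gamma(2) -> H_{N,N,N'}
  (A |-> x, B |-> y) is the normal closure in bar-Gamma(2) of the relators.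
  PhiT N is its full preimage in Gamma(2) (so it contains -I).\<close>
inductive_set PhiT :: "nat \<Rightarrow> mat set" for N :: nat where
  one: "mI \<in> PhiT N"
| negone: "mneg mI \<in> PhiT N"
| conj: "g \<in> Gamma2 \<Longrightarrow> r \<in> relators N \<Longrightarrow> mmul (mmul g r) (minv g) \<in> PhiT N"
| mult: "a \<in> PhiT N \<Longrightarrow> b \<in> PhiT N \<Longrightarrow> mmul a b \<in> PhiT N"
| inv: "a \<in> PhiT N \<Longrightarrow> minv a \<in> PhiT N"

definition PhiPrime :: "nat \<Rightarrow> mat set set" where
  "PhiPrime N = psl_class ` PhiT N"

text \<open>An element of SL_2(Zhat_odd) is a compatible family (G m)_{m odd} with
  G m in SL_2(Z/mZ) (entries normalised to [0,m)); at even m the family is 0.\<close>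
definition SLhat :: "(nat \<Rightarrow> mat) set" where
  "SLhat = {G. (\<forall>m. odd m \<longrightarrow> mred m (G m) = G m \<and> (mdet (G m) - 1) mod int m = 0
                        \<and> (\<forall>d. d dvd m \<longrightarrow> mred d (G m) = G d))
             \<and> (\<forall>m. even m \<longrightarrow> G m = (0, 0, 0, 0))}"

definition negHat :: "(nat \<Rightarrow> mat) \<Rightarrow> (nat \<Rightarrow> mat)" where
  "negHat G = (\<lambda>m. if odd m then mred m (mneg (G m)) else G m)"

definition pslhat_of :: "(nat \<Rightarrow> mat) \<Rightarrow> (nat \<Rightarrow> mat) set" where
  "pslhat_of G = {G, negHat G}"

definition PSLhat :: "(nat \<Rightarrow> mat) set set" where
  "PSLhat = pslhat_of ` SLhat"

text \<open>Profinite topology: SL_2(Zhat_odd) carries the subspace topology of the product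
  of discrete spaces (inverse limit topology); PSL_2(Zhat_odd) the quotient topology.\<close>
definition SLhat_top :: "(nat \<Rightarrow> mat) topology" where
  "SLhat_top = subtopology (product_topology (\<lambda>m. discrete_topology UNIV) UNIV) SLhat"

definition PSLhat_top :: "(nat \<Rightarrow> mat) set topology" where
  "PSLhat_top = topology (\<lambda>U. U \<subseteq> PSLhat \<and> openin SLhat_top {G \<in> SLhat. pslhat_of G \<in> U})"

definition iota :: "mat \<Rightarrow> (nat \<Rightarrow> mat)" where
  "iota M = (\<lambda>m. if odd m then mred m M else (0, 0, 0, 0))"

definition psl_embed :: "mat set \<Rightarrow> (nat \<Rightarrow> mat) set" where
  "psl_embed X = iota ` X"

text \<open>The Klein four-subgroup D_3 of PSL_2(Z/3Z), given by its 8 representatives in SL_2(Z/3Z).\<close>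
definition D3 :: "mat set" where
  "D3 = mred 3 ` {mI, mneg mI, (0, -1, 1, 0), mneg (0, -1, 1, 0),
                  (-1, 1, 1, 1), mneg (-1, 1, 1, 1), (1, 1, 1, -1), mneg (1, 1, 1, -1)}"

definition Dhat_odd :: "(nat \<Rightarrow> mat) set set" where
  "Dhat_odd = {X \<in> PSLhat. \<exists>G \<in> X. G 3 \<in> D3}"

end

theory Submission
  imports Defs "HOL-Algebra.Coset" "HOL-Number_Theory.Cong"
begin

lemma mmul_assoc: "mmul (mmul X Y) Z = mmul X (mmul Y Z)"
  by (cases X; cases Y; cases Z) (simp add: algebra_simps)

lemma mmul_mI [simp]: "mmul mI X = X" "mmul X mI = X"
  by (cases X; simp add: mI_def)+

lemma mdet_mmul: "mdet (mmul X Y) = mdet X * mdet Y"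
  by (cases X; cases Y) (simp add: algebra_simps)

lemma mdet_minv [simp]: "mdet (minv X) = mdet X"
  by (cases X) (simp add: algebra_simps)

lemma minv_r: "mdet X = 1 \<Longrightarrow> mmul X (minv X) = mI"
  by (cases X) (simp add: mI_def algebra_simps)

lemma minv_l: "mdet X = 1 \<Longrightarrow> mmul (minv X) X = mI"
  by (cases X) (simp add: mI_def algebra_simps)

lemma minv_minv [simp]: "minv (minv X) = X"
  by (cases X) simp

lemma minv_mmul: "minv (mmul X Y) = mmul (minv Y) (minv X)"
  by (cases X; cases Y) (simp add: algebra_simps)

lemma mdet_mI [simp]: "mdet mI = 1" by (simp add: mI_def)
lemma mdet_mneg [simp]: "mdet (mneg X) = mdet X" by (cases X) simp

lemma mod_2prod: "((a::int)*b + c*d) mod m = ((a mod m)*(b mod m) + (c mod m)*(d mod m)) mod m"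
  by (metis mod_add_eq mod_mult_eq)

lemma mred_mmul: "mred m (mmul X Y) = mred m (mmul (mred m X) (mred m Y))"
proof -
  obtain a b c d a' b' c' d' where "X = (a,b,c,d)" "Y = (a',b',c',d')" by (cases X, cases Y)
  then show ?thesis by (simp add: mod_2prod[symmetric])
qed

lemma mred_mred [simp]: "mred m (mred m X) = mred m X"
  by (cases X) simp

lemma mred_minv: "mred m (minv X) = mred m (minv (mred m X))"
  by (cases X) (simp add: mod_simps)

lemma mred_mneg: "mred m (mneg X) = mred m (mneg (mred m X))"
  by (cases X) (simp add: mod_simps)

lemma mred_cong_mmul:
  "mred m X = mred m X' \<Longrightarrow> mred m Y = mred m Y' \<Longrightarrow> mred m (mmul X Y) = mred m (mmul X' Y')"
  by (metis mred_mmul)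

lemma mred_dvd: "d dvd m \<Longrightarrow> mred d (mred m X) = mred d X"
  by (cases X) (simp add: mod_mod_cancel)

lemma mred_cong_minv: "mred m X = mred m X' \<Longrightarrow> mred m (minv X) = mred m (minv X')"
  by (metis mred_minv)

lemma mpow_add: "mpow X (i + j) = mmul (mpow X i) (mpow X j)"
  by (induction i) (auto simp: mmul_assoc)

lemma mdet_mpow: "mdet X = 1 \<Longrightarrow> mdet (mpow X n) = 1"
  by (induction n) (auto simp: mdet_mmul)

definition u :: "int \<Rightarrow> mat" where "u t = (1, t, 0, 1)"
definition l :: "int \<Rightarrow> mat" where "l t = (1, 0, t, 1)"

lemma u_add: "mmul (u s) (u t) = u (s + t)" by (simp add: u_def)
lemma l_add: "mmul (l s) (l t) = l (s + t)" by (simp add: l_def)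
lemma mpow_u: "mpow (u t) n = u (int n * t)"
  by (induction n) (auto simp: u_def mI_def algebra_simps)
lemma mpow_l: "mpow (l t) n = l (int n * t)"
  by (induction n) (auto simp: l_def mI_def algebra_simps)
lemma mdet_u [simp]: "mdet (u t) = 1" by (simp add: u_def)
lemma mdet_l [simp]: "mdet (l t) = 1" by (simp add: l_def)
lemma u0 [simp]: "u 0 = mI" by (simp add: u_def mI_def)
lemma l0 [simp]: "l 0 = mI" by (simp add: l_def mI_def)
lemma matA_u: "matA = u 2" by (simp add: u_def matA_def)
lemma matB_l: "matB = l 2" by (simp add: l_def matB_def)
lemma minv_u: "minv (u t) = u (-t)" by (simp add: u_def)
lemma minv_l': "minv (l t) = l (-t)" by (simp add: l_def)

lemma mred_u: "mred m (u t) = mred m (u (t mod int m))" by (simp add: u_def)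
lemma mred_l: "mred m (l t) = mred m (l (t mod int m))" by (simp add: l_def)

inductive_set Elem :: "mat set" where
  E0: "mI \<in> Elem"
| Eu: "E \<in> Elem \<Longrightarrow> mmul (u t) E \<in> Elem"
| El: "E \<in> Elem \<Longrightarrow> mmul (l t) E \<in> Elem"

lemma Elem_mmul: "E \<in> Elem \<Longrightarrow> F \<in> Elem \<Longrightarrow> mmul E F \<in> Elem"
  by (induction E rule: Elem.induct) (auto simp: mmul_assoc intro: Elem.intros)

lemma Elem_u: "u t \<in> Elem" using Elem.Eu[OF Elem.E0, of t] by simp
lemma Elem_l: "l t \<in> Elem" using Elem.El[OF Elem.E0, of t] by simp

lemma Elem_det: "E \<in> Elem \<Longrightarrow> mdet E = 1"
  by (induction E rule: Elem.induct) (auto simp: mdet_mmul)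

lemma mred_eq_dvdI:
  assumes "int m dvd (x1 - y1)" "int m dvd (x2 - y2)" "int m dvd (x3 - y3)" "int m dvd (x4 - y4)"
  shows "mred m (x1,x2,x3,x4) = mred m (y1,y2,y3,y4)"
  using assms by (simp add: mod_eq_dvd_iff)

lemma diag_Elem:
  assumes "int m dvd (a*a' - 1)"
  shows "\<exists>E\<in>Elem. mred m E = mred m (a,0,0,a')"
proof -
  define E where "E = mmul (mmul (mmul (mmul (mmul (u a) (l (-a'))) (u a)) (u (-1))) (l 1)) (u (-1))"
  have "E \<in> Elem" unfolding E_def by (intro Elem_mmul Elem_u Elem_l)
  moreover have "E = (2*a - a*a*a', a*a' - 1, 1 - a*a', a')"
    unfolding E_def by (simp add: u_def l_def algebra_simps)
  moreover have "mred m (2*a - a*a*a', a*a' - 1, 1 - a*a', a') = mred m (a,0,0,a')"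
  proof (rule mred_eq_dvdI)
    have "2*a - a*a*a' - a = - a * (a*a' - 1)" by (simp add: algebra_simps)
    then show "int m dvd (2*a - a*a*a' - a)" using assms by simp
    show "int m dvd (a*a' - 1 - 0)" using assms by simp
    have "1 - a*a' - 0 = - (a*a' - 1)" by simp
    then show "int m dvd (1 - a*a' - 0)" using assms by (metis dvd_minus_iff)
  qed simp
  ultimately show ?thesis by blast
qed

lemma unit_Elem:
  assumes e: "int m dvd (a*a' - 1)" and f: "int m dvd (a*d - b*c - 1)"
  shows "\<exists>E\<in>Elem. mred m E = mred m (a,b,c,d)"
proof -
  obtain D where D: "D \<in> Elem" "mred m D = mred m (a,0,0,a')" using diag_Elem[OF e] by blast
  define E where "E = mmul (mmul (l (c*a')) D) (u (a'*b))"
  have "E \<in> Elem" unfolding E_def using D by (intro Elem_mmul Elem_u Elem_l)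
  moreover have "mred m E = mred m (mmul (mmul (l (c*a')) (a,0,0,a')) (u (a'*b)))"
    unfolding E_def by (intro mred_cong_mmul D refl)
  moreover have "mmul (mmul (l (c*a')) (a,0,0,a')) (u (a'*b)) = (a, a*a'*b, c*a'*a, c*a'*a*a'*b + a')"
    by (simp add: u_def l_def algebra_simps)
  moreover have "mred m (a, a*a'*b, c*a'*a, c*a'*a*a'*b + a') = mred m (a,b,c,d)"
  proof (rule mred_eq_dvdI)
    have "a*a'*b - b = b * (a*a' - 1)" by (simp add: algebra_simps)
    then show "int m dvd (a*a'*b - b)" using e by simp
    have "c*a'*a - c = c * (a*a' - 1)" by (simp add: algebra_simps)
    then show "int m dvd (c*a'*a - c)" using e by simp
    have "c*a'*a*a'*b + a' - d = (a*a'-1)*(2*d + (a*a'-1)*d - a') - (a*d-b*c-1)*(a'*(1+(a*a'-1)))"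
      by (simp add: algebra_simps)
    then show "int m dvd (c*a'*a*a'*b + a' - d)" using e f by (simp add: dvd_diff)
  qed simp
  ultimately show ?thesis by metis
qed

lemma coprime_by_primes: "(y::int) \<noteq> 0 \<Longrightarrow> (\<And>p. prime p \<Longrightarrow> p dvd x \<Longrightarrow> p dvd y \<Longrightarrow> False) \<Longrightarrow> coprime x y"
  by (smt (verit) coprimeI dvdE dvd_trans mult_eq_0_iff prime_divisor_exists)

lemma make_unit:
  fixes a c :: int
  assumes m: "m > 0" and f: "int m dvd (a*d - b*c - 1)"
  shows "\<exists>t. coprime (a + t*c) (int m)"
proof -
  define S where "S = {p::int. prime p \<and> p dvd int m \<and> \<not> p dvd a}"
  have finS: "finite S"
  proof -
    have "S \<subseteq> {-int m..int m}"
    proof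
      fix x assume "x \<in> S"
      then have x: "prime x" "x dvd int m" unfolding S_def by auto
      have "x > 0" using x(1) by (simp add: prime_gt_0_int)
      moreover have "x \<le> int m" using x(2) m by (simp add: zdvd_imp_le)
      ultimately show "x \<in> {-int m..int m}" by simp
    qed
    then show ?thesis by (rule finite_subset) simp
  qed
  define t where "t = prod id S"
  have "coprime (a + t*c) (int m)"
  proof (rule coprime_by_primes)
    show "int m \<noteq> 0" using m by simp
  next
    fix p :: int assume p: "prime p" "p dvd a + t*c" "p dvd int m"
    show False
    proof (cases "p dvd a")
      case True
      then have ptc: "p dvd t*c" using p(2) by (simp add: dvd_add_right_iff)
      have "\<not> p dvd t"
      proof
        assume "p dvd t"
        then obtain q where q: "q \<in> S" "p dvd q" unfolding t_def
          using prime_dvd_prod_iff[OF finS p(1)] by auto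
        then have "p = q" using p(1) S_def primes_dvd_imp_eq by auto
        then show False using q True S_def by auto
      qed
      then have "p dvd c" using ptc p(1) prime_dvd_mult_iff by blast
      then have "p dvd a*d - b*c" using True by simp
      moreover have "p dvd a*d - b*c - 1" using f p(3) dvd_trans by blast
      ultimately have "p dvd (a*d - b*c) - (a*d - b*c - 1)" by (rule dvd_diff)
      then have "p dvd 1" by simp
      then show False using p(1) by (simp add: prime_int_iff)
    next
      case False
      then have "p \<in> S" using p S_def by auto
      then have "p dvd t" unfolding t_def using finS dvd_prodI[of S p id] by simp
      then have "p dvd t*c" by (rule dvd_mult2)
      then have "p dvd a" using p(2) by (simp add: dvd_add_left_iff)
      then show False using False by simp
    qed
  qed
  then show ?thesis by blast
qed

lemma gen_Elem:
  assumes m: "m > 0" and f: "int m dvd (mdet Y - 1)"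
  shows "\<exists>E\<in>Elem. mred m E = mred m Y"
proof -
  obtain a b c d where Y: "Y = (a,b,c,d)" by (cases Y)
  have f': "int m dvd (a*d - b*c - 1)" using f Y by simp
  obtain t where t: "coprime (a + t*c) (int m)" using make_unit[OF m f'] by blast
  obtain a' where a': "[(a + t*c) * a' = 1] (mod int m)" using cong_solve_coprime_int[OF t] by blast
  have e: "int m dvd ((a + t*c) * a' - 1)" using a' by (simp add: cong_iff_dvd_diff dvd_diff_commute)
  have det': "(a + t*c)*d - (b + t*d)*c = a*d - b*c" by (simp add: algebra_simps)
  obtain E' where E': "E' \<in> Elem" "mred m E' = mred m (a + t*c, b + t*d, c, d)"
    using unit_Elem[OF e, of d "b + t*d" c] f' det' by auto
  have "mmul (u (-t)) (a + t*c, b + t*d, c, d) = Y" using Y by (simp add: u_def algebra_simps)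
  moreover have "mred m (mmul (u (-t)) E') = mred m (mmul (u (-t)) (a + t*c, b + t*d, c, d))"
    by (rule mred_cong_mmul[OF refl E'(2)])
  ultimately have "mred m (mmul (u (-t)) E') = mred m Y" by simp
  moreover have "mmul (u (-t)) E' \<in> Elem" using E'(1) by (rule Elem.Eu)
  ultimately show ?thesis by blast
qed

lemma mred2_mI: "mred 2 mI = mI" by (simp add: mI_def)

lemma Gamma2_SL: "g \<in> Gamma2 \<Longrightarrow> mdet g = 1" by (simp add: Gamma2_def SL2Z_def)

lemma Gamma2_mmul: "g \<in> Gamma2 \<Longrightarrow> h \<in> Gamma2 \<Longrightarrow> mmul g h \<in> Gamma2"
  unfolding Gamma2_def SL2Z_def
  by (auto simp: mdet_mmul mred_mmul[of 2 g h] mred2_mI)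

lemma Gamma2_minv: "g \<in> Gamma2 \<Longrightarrow> minv g \<in> Gamma2"
  unfolding Gamma2_def SL2Z_def
  by (auto simp: mred_minv[of 2 g]) (simp add: mI_def)

lemma mI_Gamma2: "mI \<in> Gamma2" by (simp add: Gamma2_def SL2Z_def mI_def)

lemma u_Gamma2: "even t \<Longrightarrow> u t \<in> Gamma2"
  by (simp add: Gamma2_def SL2Z_def u_def mI_def)
lemma l_Gamma2: "even t \<Longrightarrow> l t \<in> Gamma2"
  by (simp add: Gamma2_def SL2Z_def l_def mI_def)

lemma mdet_commut: "mdet X = 1 \<Longrightarrow> mdet Y = 1 \<Longrightarrow> mdet (commut X Y) = 1"
  by (simp add: commut_def mdet_mmul)

lemma matA_det [simp]: "mdet matA = 1" by (simp add: matA_def)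
lemma matB_det [simp]: "mdet matB = 1" by (simp add: matB_def)

lemma relators_det: "r \<in> relators N \<Longrightarrow> mdet r = 1"
  by (auto simp: relators_def mdet_mpow mdet_commut)

lemma conj_det: "mdet g = 1 \<Longrightarrow> mdet r = 1 \<Longrightarrow> mdet (mmul (mmul g r) (minv g)) = 1"
  by (simp add: mdet_mmul)

lemma PhiT_det: "P \<in> PhiT N \<Longrightarrow> mdet P = 1"
  by (induction P rule: PhiT.induct)
     (auto simp: mdet_mmul Gamma2_SL relators_det mI_def)

lemma mmul_mnegI: "mmul (mmul g (mneg mI)) h = mneg (mmul g h)"
  by (cases g; cases h) (simp add: mI_def)

lemma conj_mult:
  assumes "mdet g = 1"
  shows "mmul (mmul g (mmul a b)) (minv g) = mmul (mmul (mmul g a) (minv g)) (mmul (mmul g b) (minv g))"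
proof -
  have "mmul (mmul (mmul g a) (minv g)) (mmul (mmul g b) (minv g))
      = mmul (mmul g a) (mmul (mmul (minv g) g) (mmul b (minv g)))" by (simp add: mmul_assoc)
  also have "\<dots> = mmul (mmul g (mmul a b)) (minv g)" using minv_l[OF assms] by (simp add: mmul_assoc)
  finally show ?thesis by simp
qed

lemma conj_conj:
  "mmul (mmul g (mmul (mmul h r) (minv h))) (minv g) = mmul (mmul (mmul g h) r) (minv (mmul g h))"
  by (simp add: mmul_assoc minv_mmul)

lemma conj_inv:
  "minv (mmul (mmul g a) (minv g)) = mmul (mmul g (minv a)) (minv g)"
  by (simp add: mmul_assoc minv_mmul)

lemma PhiT_conj: "P \<in> PhiT N \<Longrightarrow> g \<in> Gamma2 \<Longrightarrow> mmul (mmul g P) (minv g) \<in> PhiT N"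
proof (induction P rule: PhiT.induct)
  case one
  then show ?case using minv_r[OF Gamma2_SL] by (simp add: PhiT.one)
next
  case negone
  then show ?case using minv_r[OF Gamma2_SL] by (simp add: PhiT.negone mmul_mnegI)
next
  case (conj h r)
  then show ?case unfolding conj_conj by (intro PhiT.conj Gamma2_mmul)
next
  case (mult a b)
  show ?case unfolding conj_mult[OF Gamma2_SL[OF mult.prems]]
    by (rule PhiT.mult[OF mult.IH(1)[OF mult.prems] mult.IH(2)[OF mult.prems]])
next
  case (inv a)
  then show ?case using PhiT.inv[OF inv.IH[OF inv.prems]] by (simp add: conj_inv)
qed

lemma Elem_Gamma2:
  assumes "odd m" "E \<in> Elem"
  shows "\<exists>g\<in>Gamma2. mred m g = mred m E"
  using assms(2)
proof (induction E rule: Elem.induct)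
  case E0
  then show ?case using mI_Gamma2 by blast
next
  case (Eu E t)
  then obtain g where g: "g \<in> Gamma2" "mred m g = mred m E" by blast
  define t' where "t' = (if even t then t else t + int m)"
  have "even t'" using assms(1) by (simp add: t'_def)
  have "mred m (u t') = mred m (u t)" by (simp add: t'_def u_def)
  then have "mred m (mmul (u t') g) = mred m (mmul (u t) E)" using g(2) by (rule mred_cong_mmul)
  moreover have "mmul (u t') g \<in> Gamma2" using g(1) \<open>even t'\<close> by (intro Gamma2_mmul u_Gamma2)
  ultimately show ?case by blast
next
  case (El E t)
  then obtain g where g: "g \<in> Gamma2" "mred m g = mred m E" by blast
  define t' where "t' = (if even t then t else t + int m)"
  have "even t'" using assms(1) by (simp add: t'_def)
  have "mred m (l t') = mred m (l t)" by (simp add: t'_def l_def)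
  then have "mred m (mmul (l t') g) = mred m (mmul (l t) E)" using g(2) by (rule mred_cong_mmul)
  moreover have "mmul (l t') g \<in> Gamma2" using g(1) \<open>even t'\<close> by (intro Gamma2_mmul l_Gamma2)
  ultimately show ?case by blast
qed

lemma SL_Gamma2_mod:
  assumes "odd m" "mdet X = 1"
  shows "\<exists>g\<in>Gamma2. mred m g = mred m X"
proof -
  have "m > 0" using assms(1) by (cases m) auto
  then obtain E where "E \<in> Elem" "mred m E = mred m X" using gen_Elem[of m X] assms(2) by auto
  then show ?thesis using Elem_Gamma2[OF assms(1)] by metis
qed

definition SLG :: "mat monoid" where
  "SLG = \<lparr>carrier = SL2Z, monoid.mult = mmul, one = mI\<rparr>"

lemma SLG_carrier [simp]: "carrier SLG = SL2Z" and SLG_mult [simp]: "mult SLG = mmul"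
  and SLG_one [simp]: "one SLG = mI"
  by (simp_all add: SLG_def)

lemma group_SLG: "group SLG"
proof (rule groupI)
  show "\<And>x y. x \<in> carrier SLG \<Longrightarrow> y \<in> carrier SLG \<Longrightarrow> x \<otimes>\<^bsub>SLG\<^esub> y \<in> carrier SLG"
    by (simp add: SL2Z_def mdet_mmul)
  show "\<one>\<^bsub>SLG\<^esub> \<in> carrier SLG" by (simp add: SL2Z_def)
  show "\<And>x y z. x \<in> carrier SLG \<Longrightarrow> y \<in> carrier SLG \<Longrightarrow> z \<in> carrier SLG \<Longrightarrow>
    x \<otimes>\<^bsub>SLG\<^esub> y \<otimes>\<^bsub>SLG\<^esub> z = x \<otimes>\<^bsub>SLG\<^esub> (y \<otimes>\<^bsub>SLG\<^esub> z)"
    by (simp add: mmul_assoc)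
  show "\<And>x. x \<in> carrier SLG \<Longrightarrow> \<one>\<^bsub>SLG\<^esub> \<otimes>\<^bsub>SLG\<^esub> x = x" by simp
  show "\<And>x. x \<in> carrier SLG \<Longrightarrow> \<exists>y\<in>carrier SLG. y \<otimes>\<^bsub>SLG\<^esub> x = \<one>\<^bsub>SLG\<^esub>"
    by (rule_tac x="minv x" in bexI) (auto simp: SL2Z_def minv_l)
qed

interpretation SLG: group SLG by (rule group_SLG)

lemma inv_SLG: "X \<in> SL2Z \<Longrightarrow> inv\<^bsub>SLG\<^esub> X = minv X"
  by (rule SLG.inv_equality) (auto simp: SL2Z_def minv_l)

lemma mpow_comm: "mmul (mpow X n) X = mmul X (mpow X n)"
  by (induction n) (auto simp: mmul_assoc)

lemma pow_SLG: "X \<in> SL2Z \<Longrightarrow> X [^]\<^bsub>SLG\<^esub> (n::nat) = mpow X n"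
  by (induction n) (auto simp: mpow_comm)

lemma SL2Z_I: "mdet X = 1 \<Longrightarrow> X \<in> SL2Z" by (simp add: SL2Z_def)

definition Wm :: "nat \<Rightarrow> nat \<Rightarrow> mat set" where
  "Wm N m = {X \<in> SL2Z. \<exists>P\<in>PhiT N. mred m X = mred m P}"

lemma subgroup_Wm: "subgroup (Wm N m) SLG"
proof (rule SLG.subgroupI)
  show "Wm N m \<subseteq> carrier SLG" by (auto simp: Wm_def)
  have "mI \<in> Wm N m" using PhiT.one[of N] by (auto simp: Wm_def SL2Z_def)
  then show "Wm N m \<noteq> {}" by blast
  fix a b assume a: "a \<in> Wm N m"
  then obtain P where P: "P \<in> PhiT N" "mred m a = mred m P" "a \<in> SL2Z" by (auto simp: Wm_def)
  show "inv\<^bsub>SLG\<^esub> a \<in> Wm N m"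
    using P by (auto simp: Wm_def inv_SLG SL2Z_def intro!: bexI[of _ "minv P"] PhiT.inv mred_cong_minv)
  assume b: "b \<in> Wm N m"
  then obtain Q where Q: "Q \<in> PhiT N" "mred m b = mred m Q" "b \<in> SL2Z" by (auto simp: Wm_def)
  show "a \<otimes>\<^bsub>SLG\<^esub> b \<in> Wm N m"
    using P Q by (auto simp: Wm_def SL2Z_def mdet_mmul intro!: bexI[of _ "mmul P Q"] PhiT.mult mred_cong_mmul)
qed

lemma normal_Wm:
  assumes "odd m"
  shows "Wm N m \<lhd> SLG"
  unfolding SLG.normal_inv_iff
proof (intro conjI subgroup_Wm ballI)
  fix g h assume g: "g \<in> carrier SLG" and h: "h \<in> Wm N m"
  then obtain P where P: "P \<in> PhiT N" "mred m h = mred m P" "h \<in> SL2Z" by (auto simp: Wm_def)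
  obtain g' where g': "g' \<in> Gamma2" "mred m g' = mred m g"
    using SL_Gamma2_mod[OF assms, of g] g by (auto simp: SL2Z_def)
  have "mmul (mmul g' P) (minv g') \<in> PhiT N" by (rule PhiT_conj[OF P(1) g'(1)])
  moreover have "mred m (mmul (mmul g h) (minv g)) = mred m (mmul (mmul g' P) (minv g'))"
    by (intro mred_cong_mmul mred_cong_minv g'(2)[symmetric] P(2))
  moreover have "mmul (mmul g h) (minv g) \<in> SL2Z" using g P by (auto simp: SL2Z_def mdet_mmul)
  ultimately show "g \<otimes>\<^bsub>SLG\<^esub> h \<otimes>\<^bsub>SLG\<^esub> inv\<^bsub>SLG\<^esub> g \<in> Wm N m"
    using g by (auto simp: Wm_def inv_SLG)
qed

context group begin

lemma commute_pow_left:
  assumes "x \<in> carrier G" "z \<in> carrier G" "z \<otimes> x = x \<otimes> z"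
  shows "z \<otimes> x [^] (n::nat) = x [^] n \<otimes> z"
  using group_commutes_pow[of x z n] assms by simp

lemma comm_pow_one:
  assumes c: "x \<in> carrier G" "y \<in> carrier G" "z \<in> carrier G"
    and r: "x \<otimes> y = z \<otimes> y \<otimes> x" "z \<otimes> x = x \<otimes> z" "z \<otimes> y = y \<otimes> z"
  shows "x [^] (i::nat) \<otimes> y = z [^] i \<otimes> y \<otimes> x [^] i"
proof (induction i)
  case 0
  then show ?case using c by simp
next
  case (Suc i)
  have "x [^] Suc i \<otimes> y = x \<otimes> (x [^] i \<otimes> y)"
    using c by (simp only: nat_pow_Suc2[OF c(1)] m_assoc nat_pow_closed)
  also have "\<dots> = x \<otimes> (z [^] i \<otimes> y \<otimes> x [^] i)" using Suc by simp
  also have "\<dots> = (x \<otimes> z [^] i) \<otimes> y \<otimes> x [^] i" using c by (simp add: m_assoc)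
  also have "\<dots> = z [^] i \<otimes> (x \<otimes> y) \<otimes> x [^] i"
    using c commute_pow_left[of z x i] r(2) by (simp add: m_assoc)
  also have "\<dots> = z [^] i \<otimes> z \<otimes> y \<otimes> (x \<otimes> x [^] i)" using c r(1) by (simp add: m_assoc)
  also have "\<dots> = z [^] Suc i \<otimes> y \<otimes> x [^] Suc i"
  proof -
    have "x \<otimes> x [^] i = x [^] i \<otimes> x" using nat_pow_Suc2[OF c(1), of i] nat_pow_Suc[of x i] by simp
    then show ?thesis using c by (simp add: m_assoc)
  qed
  finally show ?case .
qed

lemma comm_pow_gen:
  assumes c: "x \<in> carrier G" "y \<in> carrier G" "z \<in> carrier G"
    and r: "x \<otimes> y = z \<otimes> y \<otimes> x" "z \<otimes> x = x \<otimes> z" "z \<otimes> y = y \<otimes> z"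
  shows "x [^] (i::nat) \<otimes> y [^] (j::nat) = z [^] (i*j) \<otimes> y [^] j \<otimes> x [^] i"
proof (induction j)
  case 0
  then show ?case using c by simp
next
  case (Suc j)
  have "x [^] i \<otimes> y [^] Suc j = (x [^] i \<otimes> y [^] j) \<otimes> y" using c by (simp add: m_assoc)
  also have "\<dots> = z [^] (i*j) \<otimes> y [^] j \<otimes> (x [^] i \<otimes> y)" using Suc c by (simp add: m_assoc)
  also have "\<dots> = z [^] (i*j) \<otimes> y [^] j \<otimes> (z [^] i \<otimes> y \<otimes> x [^] i)"
    using comm_pow_one[OF c r] by simp
  also have "\<dots> = z [^] (i*j) \<otimes> (y [^] j \<otimes> z [^] i) \<otimes> y \<otimes> x [^] i" using c by (simp add: m_assoc)
  also have "\<dots> = z [^] (i*j) \<otimes> (z [^] i \<otimes> y [^] j) \<otimes> y \<otimes> x [^] i"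
    using c pow_mult_distrib group_commutes_pow
    by (metis nat_pow_closed r(3) commute_pow_left)
  also have "\<dots> = z [^] (i * Suc j) \<otimes> y [^] Suc j \<otimes> x [^] i"
  proof -
    have e: "z [^] (i + i * j) = z [^] (i*j) \<otimes> z [^] i" using nat_pow_mult[of z "i*j" i] c
      by (simp add: add.commute)
    show ?thesis using c by (simp add: e m_assoc)
  qed
  finally show ?case .
qed

end

context group begin

lemma comm_from_commutator:
  assumes "x \<in> carrier G" "y \<in> carrier G" "x \<otimes> y \<otimes> (inv x \<otimes> inv y) = \<one>"
  shows "x \<otimes> y = y \<otimes> x"
proof -
  have "x \<otimes> y \<otimes> (inv x \<otimes> inv y) \<otimes> (y \<otimes> x) = y \<otimes> x" using assms by simp
  moreover have "x \<otimes> y \<otimes> (inv x \<otimes> inv y) \<otimes> (y \<otimes> x) = x \<otimes> y"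
    using assms(1,2) by (metis inv_closed m_assoc l_inv r_one m_closed)
  ultimately show ?thesis by metis
qed

lemma commutator_rel:
  assumes "x \<in> carrier G" "y \<in> carrier G" "z = x \<otimes> y \<otimes> (inv x \<otimes> inv y)"
  shows "x \<otimes> y = z \<otimes> y \<otimes> x"
  using assms by (simp add: m_assoc)

lemma pow3_cases:
  assumes "x \<in> carrier G" "x [^] (3::nat) = \<one>" "x [^] (n::nat) = \<one>" "\<not> 3 dvd n"
  shows "x = \<one>"
proof -
  have n: "n = 3 * (n div 3) + n mod 3" by simp
  have "x [^] n = x [^] (3 * (n div 3)) \<otimes> x [^] (n mod 3)"
    using assms(1) by (simp add: nat_pow_mult)
  also have "x [^] (3 * (n div 3)) = (x [^] (3::nat)) [^] (n div 3)"
    using assms(1) by (rule nat_pow_pow[symmetric])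
  finally have "x [^] n = (x [^] (3::nat)) [^] (n div 3) \<otimes> x [^] (n mod 3)" .
  then have r: "x [^] (n mod 3) = \<one>" using assms by simp
  have "n mod 3 = 1 \<or> n mod 3 = 2" using assms(4) by presburger
  then show ?thesis
  proof
    assume "n mod 3 = 1" then show ?thesis using r assms(1) by simp
  next
    assume h: "n mod 3 = 2"
    have "x [^] (3::nat) = x [^] (2::nat) \<otimes> x" using assms(1) nat_pow_mult[of x 2 1]
      by simp
    moreover have "x [^] (2::nat) = \<one>" using r h by simp
    ultimately have "\<one> = \<one> \<otimes> x" using assms(2) by simp
    then show ?thesis using assms(1) by simp
  qed
qed

lemma key_alg:
  fixes m :: nat
  assumes c: "a \<in> carrier G" "b \<in> carrier G" and m: "odd m"
    and am: "a [^] m = \<one>" and bm: "b [^] m = \<one>"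
    and zdef: "z = a [^] (2::nat) \<otimes> b [^] (2::nat) \<otimes> (inv (a [^] (2::nat)) \<otimes> inv (b [^] (2::nat)))"
    and za: "z \<otimes> a [^] (2::nat) \<otimes> (inv z \<otimes> inv (a [^] (2::nat))) = \<one>"
    and zb: "z \<otimes> b [^] (2::nat) \<otimes> (inv z \<otimes> inv (b [^] (2::nat))) = \<one>"
    and braid: "a \<otimes> b [^] (m - 1) \<otimes> a = b [^] (m - 1) \<otimes> a \<otimes> b [^] (m - 1)"
    and cube: "a \<otimes> b [^] (m - 1) \<otimes> (a \<otimes> b [^] (m - 1)) \<otimes> (a \<otimes> b [^] (m - 1)) = \<one>"
  shows "a \<otimes> b = \<one>" "a [^] (3::nat) = \<one>"
proof -
  define A2 where "A2 = a [^] (2::nat)"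
  define B2 where "B2 = b [^] (2::nat)"
  define k where "k = (m + 1) div 2"
  have k2: "2 * k = m + 1" using m by (simp add: k_def)
  have cA: "A2 \<in> carrier G" "B2 \<in> carrier G" using c by (simp_all add: A2_def B2_def)
  have cz: "z \<in> carrier G" using zdef c by simp
  have h1: "z \<otimes> A2 = A2 \<otimes> z" using comm_from_commutator[OF cz cA(1)] za by (simp add: A2_def)
  have h2: "z \<otimes> B2 = B2 \<otimes> z" using comm_from_commutator[OF cz cA(2)] zb by (simp add: B2_def)
  have h3: "A2 \<otimes> B2 = z \<otimes> B2 \<otimes> A2" using commutator_rel[OF cA] zdef by (simp add: A2_def B2_def)
  have h4: "A2 [^] k = a"
  proof -
    have "A2 [^] k = a [^] (m + 1)" using c by (simp add: A2_def nat_pow_pow k2)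
    also have "\<dots> = a" using c am by (simp add: nat_pow_mult[symmetric])
    finally show ?thesis .
  qed
  have h5: "B2 [^] k = b"
  proof -
    have "B2 [^] k = b [^] (m + 1)" using c by (simp add: B2_def nat_pow_pow k2)
    also have "\<dots> = b" using c bm by (simp add: nat_pow_mult[symmetric])
    finally show ?thesis .
  qed
  define cc where "cc = z [^] (k*k)"
  have ccc: "cc \<in> carrier G" using cz by (simp add: cc_def)
  have h6: "a \<otimes> b = cc \<otimes> b \<otimes> a"
    using comm_pow_gen[OF cA cz h3 h1 h2, of k k] h4 h5 by (simp add: cc_def)
  have zpa: "z [^] n \<otimes> A2 = A2 \<otimes> z [^] n" for n :: nat
    using group_commutes_pow[of z A2 n] h1 cz cA by simp
  have zpb: "z [^] n \<otimes> B2 = B2 \<otimes> z [^] n" for n :: nat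
    using group_commutes_pow[of z B2 n] h2 cz cA by simp
  have cca: "cc \<otimes> a = a \<otimes> cc"
    using commute_pow_left[OF cA(1) ccc, of k] zpa h4 by (simp add: cc_def)
  have ccb: "cc \<otimes> b = b \<otimes> cc"
    using commute_pow_left[OF cA(2) ccc, of k] zpb h5 by (simp add: cc_def)
  define b' where "b' = b [^] (m - 1)"
  define d where "d = cc [^] (1 * (m - 1))"
  have cb': "b' \<in> carrier G" "d \<in> carrier G" using c ccc by (simp_all add: b'_def d_def)
  have h7: "a \<otimes> b' = d \<otimes> b' \<otimes> a"
    using comm_pow_gen[OF c ccc h6 cca ccb, of 1 "m - 1"] c by (simp add: b'_def d_def)
  have da: "d \<otimes> a = a \<otimes> d" using group_commutes_pow[of cc a "m - 1"] cca c ccc by (simp add: d_def)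
  have db': "d \<otimes> b' = b' \<otimes> d"
    using commute_pow_left[OF c(2) cb'(2), of "m - 1"] group_commutes_pow[of cc b "m - 1"] ccb c ccc
    by (simp add: d_def b'_def)
  have "(d \<otimes> b') \<otimes> (a \<otimes> a) = (d \<otimes> b') \<otimes> (b' \<otimes> a)"
  proof -
    have "(d \<otimes> b') \<otimes> (a \<otimes> a) = a \<otimes> b' \<otimes> a" using h7 c cb' by (simp add: m_assoc)
    also have "\<dots> = b' \<otimes> (a \<otimes> b')" using braid c cb' by (simp add: b'_def m_assoc)
    also have "\<dots> = b' \<otimes> (d \<otimes> b' \<otimes> a)" using h7 by simp
    also have "\<dots> = (b' \<otimes> d) \<otimes> (b' \<otimes> a)" using c cb' by (simp add: m_assoc)
    also have "\<dots> = (d \<otimes> b') \<otimes> (b' \<otimes> a)" using db' by simp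
    finally show ?thesis .
  qed
  then have "a \<otimes> a = b' \<otimes> a" using Units_l_cancel[of "d \<otimes> b'" "a \<otimes> a" "b' \<otimes> a"] c cb' by simp
  then have ab': "a = b'" using right_cancel[of a a b'] c cb' by simp
  have m1: "m = Suc (m - 1)" using m by (cases m) auto
  show ab: "a \<otimes> b = \<one>"
  proof -
    have "a \<otimes> b = b [^] Suc (m - 1)" using ab' c by (simp add: b'_def)
    then show ?thesis using m1[symmetric] bm by simp
  qed
  have a6: "a [^] (6::nat) = \<one>"
  proof -
    have a2: "a [^] (2::nat) = a \<otimes> a" using c by (simp add: numeral_2_eq_2)
    have "a [^] (6::nat) = a [^] (2::nat) \<otimes> a [^] (2::nat) \<otimes> a [^] (2::nat)"
      using c nat_pow_mult[of a 2 2] nat_pow_mult[of a 4 2] by simp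
    then have "a [^] (6::nat) = a \<otimes> a \<otimes> (a \<otimes> a) \<otimes> (a \<otimes> a)" using a2 by simp
    then show ?thesis using cube ab' by (simp add: b'_def)
  qed
  show "a [^] (3::nat) = \<one>"
  proof (cases "3 dvd m")
    case True
    have m6: "m = 6 * (m div 6) + m mod 6" by simp
    have "m mod 6 = 3"
      using m True by presburger
    have "a [^] m = a [^] (6 * (m div 6)) \<otimes> a [^] (m mod 6)"
      using c by (simp add: nat_pow_mult)
    also have "a [^] (6 * (m div 6)) = (a [^] (6::nat)) [^] (m div 6)"
      using c(1) by (rule nat_pow_pow[symmetric])
    finally have "a [^] m = (a [^] (6::nat)) [^] (m div 6) \<otimes> a [^] (3::nat)"
      using \<open>m mod 6 = 3\<close> by simp
    then show ?thesis using a6 am c by simp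
  next
    case False
    have "a [^] (6::nat) = a [^] (3::nat) \<otimes> a [^] (3::nat)" using c nat_pow_mult[of a 3 3] by simp
    have a1: "a = \<one>"
    proof (rule ccontr)
      assume na: "a \<noteq> \<one>"
      define x where "x = a [^] (2::nat)"
      have "x [^] (3::nat) = \<one>" using a6 c by (simp add: x_def nat_pow_pow)
      moreover have "x [^] m = \<one>"
      proof -
        have "x [^] m = a [^] (2 * m)" using c by (simp add: x_def nat_pow_pow)
        also have "\<dots> = (a [^] m) [^] (2::nat)" using c by (simp add: nat_pow_pow mult.commute)
        finally show ?thesis using am by simp
      qed
      ultimately have "x = \<one>" using pow3_cases[of x m] False c by (simp add: x_def)
      then have "a [^] (2::nat) = \<one>" by (simp add: x_def)
      then have "a [^] m = a"
      proof -
        assume a2: "a [^] (2::nat) = \<one>"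
        have "a [^] m = a [^] (2 * (m div 2)) \<otimes> a [^] (m mod 2)"
          using c by (simp add: nat_pow_mult)
        also have "a [^] (2 * (m div 2)) = (a [^] (2::nat)) [^] (m div 2)"
          using c(1) by (rule nat_pow_pow[symmetric])
        also have "m mod 2 = 1" using m by presburger
        finally show ?thesis using a2 c by simp
      qed
      then show False using am na by simp
    qed
    then show ?thesis by simp
  qed
qed

end

lemma D3_eq: "D3 = {(1,0,0,1),(2,0,0,2),(0,2,1,0),(0,1,2,0),(2,1,1,1),(1,2,2,2),(1,1,1,2),(2,2,2,1)}"
  by (simp add: D3_def mI_def)

lemma D3_mult: "X \<in> D3 \<Longrightarrow> Y \<in> D3 \<Longrightarrow> mred 3 (mmul X Y) \<in> D3"
  unfolding D3_eq by (elim insertE emptyE; simp)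

lemma D3_minv: "X \<in> D3 \<Longrightarrow> mred 3 (minv X) \<in> D3"
  unfolding D3_eq by (elim insertE emptyE; simp)

lemma D3_mneg: "X \<in> D3 \<Longrightarrow> mred 3 (mneg X) \<in> D3"
  unfolding D3_eq by (elim insertE emptyE; simp)

lemma D3_mult': "mred 3 X \<in> D3 \<Longrightarrow> mred 3 Y \<in> D3 \<Longrightarrow> mred 3 (mmul X Y) \<in> D3"
  using D3_mult[of "mred 3 X" "mred 3 Y"] mred_mmul[of 3 X Y] by simp

lemma D3_minv': "mred 3 X \<in> D3 \<Longrightarrow> mred 3 (minv X) \<in> D3"
  using D3_minv[of "mred 3 X"] mred_minv[of 3 X] by simp

lemma D3_not_u: "X \<in> D3 \<Longrightarrow> (r::int) \<in> {1,2} \<Longrightarrow> mred 3 (mmul X (u (-r))) \<notin> D3"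
  unfolding D3_eq by (auto simp: u_def)

lemma D3_not_u': "mred 3 X \<in> D3 \<Longrightarrow> (r::int) \<in> {1,2} \<Longrightarrow> mred 3 (mmul X (u (-r))) \<notin> D3"
  using D3_not_u[of "mred 3 X" r] mred_mmul[of 3 X "u (-r)"] mred_mmul[of 3 "mred 3 X" "u (-r)"] by simp

lemma mred3_mI: "mred 3 mI = (1,0,0,1)" by (simp add: mI_def)
lemma mred3_negI: "mred 3 (mneg mI) = (2,0,0,2)" by (simp add: mI_def)

lemma mod3_cases: "(x::int) mod 3 \<in> {0,1,2}" by auto

lemma D3_char_red:
  assumes "a \<in> {0,1,2}" "b \<in> {0,1,2}" "c \<in> {0,1,2}" "d \<in> {0,1,2}"
  shows "(a,b,c,d) \<in> D3 \<longleftrightarrow> ((a*d - b*c) mod 3 = 1 \<and> ((a+d) mod 3 = 0 \<or> (a,b,c,d) = (1,0,0,1) \<or> (a,b,c,d) = (2,0,0,2)))"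
  using assms unfolding D3_eq by (elim insertE emptyE; simp)

lemma D3_char:
  "mred 3 (a,b,c,d) \<in> D3 \<longleftrightarrow> ((a*d - b*c) mod 3 = 1 \<and> ((a+d) mod 3 = 0 \<or> mred 3 (a,b,c,d) = (1,0,0,1) \<or> mred 3 (a,b,c,d) = (2,0,0,2)))"
proof -
  have e1: "(a*d - b*c) mod 3 = ((a mod 3)*(d mod 3) - (b mod 3)*(c mod 3)) mod (3::int)"
  proof -
    have "((a mod 3)*(d mod 3) - (b mod 3)*(c mod 3)) mod (3::int) = (((a mod 3)*(d mod 3)) mod 3 - ((b mod 3)*(c mod 3)) mod 3) mod 3"
      by (rule mod_diff_eq[symmetric])
    also have "\<dots> = ((a*d) mod 3 - (b*c) mod 3) mod 3" by (simp only: mod_mult_eq)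
    also have "\<dots> = (a*d - b*c) mod 3" by (rule mod_diff_eq)
    finally show ?thesis by simp
  qed
  have e2: "(a+d) mod 3 = (a mod 3 + d mod 3) mod (3::int)" by (rule mod_add_eq[symmetric])
  obtain a' b' c' d' where defs: "a mod 3 = a'" "b mod 3 = b'" "c mod 3 = c'" "d mod 3 = d'" by blast
  have r: "a' \<in> {0,1,2}" "b' \<in> {0,1,2}" "c' \<in> {0,1,2}" "d' \<in> {0,1,2}"
    using defs mod3_cases[of a] mod3_cases[of b] mod3_cases[of c] mod3_cases[of d] by auto
  have m: "mred 3 (a,b,c,d) = (a',b',c',d')" using defs by simp
  have e1': "(a*d - b*c) mod 3 = (a'*d' - b'*c') mod 3" using e1 defs by simp
  have e2': "(a+d) mod 3 = (a'+d') mod 3" using e2 defs by simp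
  show ?thesis unfolding m e1' e2' by (rule D3_char_red[OF r])
qed

lemma tr1: "(case mmul (mmul (g1,g2,g3,g4) (a,b,c,d)) (minv (g1,g2,g3,g4)) of (x1,x2,x3,x4) \<Rightarrow> x1 + x4) = (g1*g4 - g2*g3) * (a + d)"
  apply simp
  apply algebra
  done

lemma trace_conj: "mdet g = 1 \<Longrightarrow> (case mmul (mmul g r) (minv g) of (a,b,c,d) \<Rightarrow> a + d) = (case r of (a,b,c,d) \<Rightarrow> a + d)"
proof -
  assume h: "mdet g = 1"
  obtain g1 g2 g3 g4 where g: "g = (g1,g2,g3,g4)" by (cases g)
  obtain a b c d where r: "r = (a,b,c,d)" by (cases r)
  have "g1*g4 - g2*g3 = 1" using h g by simp
  then show ?thesis using g r tr1[of g1 g2 g3 g4 a b c d] by simp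
qed

lemma D3_conj:
  assumes g: "mdet g = 1" and r: "mred 3 r \<in> D3"
  shows "mred 3 (mmul (mmul g r) (minv g)) \<in> D3"
proof -
  define C where "C = mmul (mmul g r) (minv g)"
  obtain a b c d where r4: "r = (a,b,c,d)" by (cases r)
  obtain a' b' c' d' where C4: "C = (a',b',c',d')" by (cases C)
  have detr: "(a*d - b*c) mod 3 = 1" and
    cs: "(a+d) mod 3 = 0 \<or> mred 3 (a,b,c,d) = (1,0,0,1) \<or> mred 3 (a,b,c,d) = (2,0,0,2)"
    using r r4 D3_char[of a b c d] by auto
  have "mdet C = mdet r" using g by (simp add: C_def mdet_mmul)
  then have detC: "(a'*d' - b'*c') mod 3 = 1" using detr C4 r4 by simp
  have trC: "a' + d' = a + d" using trace_conj[OF g, of r] C4 r4 by (simp add: C_def)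
  from cs show ?thesis
  proof (elim disjE)
    assume "(a+d) mod 3 = 0"
    then show ?thesis using D3_char[of a' b' c' d'] detC trC C4 by (simp add: C_def[symmetric])
  next
    assume h: "mred 3 (a,b,c,d) = (1,0,0,1)"
    then have "mred 3 r = mred 3 mI" using r4 by (simp add: mred3_mI)
    then have "mred 3 C = mred 3 (mmul (mmul g mI) (minv g))" unfolding C_def
      by (intro mred_cong_mmul refl)
    then have "mred 3 C = (1,0,0,1)" using minv_r[OF g] by (simp add: mred3_mI)
    then show ?thesis by (simp add: C_def D3_eq)
  next
    assume h: "mred 3 (a,b,c,d) = (2,0,0,2)"
    then have "mred 3 r = mred 3 (mneg mI)" using r4 by (simp add: mred3_negI)
    then have "mred 3 C = mred 3 (mmul (mmul g (mneg mI)) (minv g))" unfolding C_def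
      by (intro mred_cong_mmul refl)
    then have "mred 3 C = (2,0,0,2)" using minv_r[OF g] by (simp add: mmul_mnegI mred3_negI del: mneg.simps)
    then show ?thesis by (simp add: C_def D3_eq)
  qed
qed

lemma relA3: "3 dvd N \<Longrightarrow> mred 3 (mpow matA N) \<in> D3"
  unfolding matA_u mpow_u by (auto simp: u_def D3_eq)

lemma relB3: "3 dvd N \<Longrightarrow> mred 3 (mpow matB N) \<in> D3"
  unfolding matB_l mpow_l by (auto simp: l_def D3_eq)

lemma z_mod3: "mred 3 (commut matA matB) \<in> D3"
  by (simp add: commut_def matA_def matB_def D3_eq)

lemma zpow3: "mred 3 (mpow (commut matA matB) n) \<in> D3"
proof (induction n)
  case 0
  then show ?case by (simp add: D3_eq mI_def)
next
  case (Suc n)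
  then show ?case using D3_mult'[OF z_mod3 Suc] by simp
qed

lemma zA3: "mred 3 (commut (commut matA matB) matA) \<in> D3"
  by (simp add: commut_def matA_def matB_def D3_eq)

lemma zB3: "mred 3 (commut (commut matA matB) matB) \<in> D3"
  by (simp add: commut_def matA_def matB_def D3_eq)

lemma relators3: "3 dvd N \<Longrightarrow> r \<in> relators N \<Longrightarrow> mred 3 r \<in> D3"
  unfolding relators_def using relA3 relB3 zpow3 zA3 zB3 by auto

lemma PhiT_mod3: "P \<in> PhiT N \<Longrightarrow> 3 dvd N \<Longrightarrow> mred 3 P \<in> D3"
proof (induction P rule: PhiT.induct)
  case one
  then show ?case by (simp add: D3_eq mI_def)
next
  case negone
  then show ?case by (simp add: D3_eq mI_def)
next
  case (conj g r)
  then show ?case using D3_conj[OF Gamma2_SL relators3] by blast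
next
  case (mult a b)
  then show ?case using D3_mult' by blast
next
  case (inv a)
  then show ?case using D3_minv' by blast
qed

lemma minv_mI [simp]: "minv mI = mI" by (simp add: mI_def)

lemma relators_PhiT: "r \<in> relators N \<Longrightarrow> r \<in> PhiT N"
  using PhiT.conj[OF mI_Gamma2, of r N] by simp

locale QC =
  fixes N m :: nat
  assumes modd: "odd m"
begin

definition Q :: "mat set monoid" where "Q = SLG Mod (Wm N m)"
definition phi :: "mat \<Rightarrow> mat set" where "phi X = Wm N m #>\<^bsub>SLG\<^esub> X"

lemma nW: "Wm N m \<lhd> SLG" using normal_Wm[OF modd] .

lemma gQ: "group Q" unfolding Q_def using normal.factorgroup_is_group[OF nW] .

lemma hom_phi: "phi \<in> hom SLG Q"
  using normal.r_coset_hom_Mod[OF nW] unfolding phi_def Q_def .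

lemma ghom: "group_hom SLG Q phi"
  by (simp add: group_hom_def group_hom_axioms_def group_SLG gQ hom_phi)

sublocale Qg: group Q by (rule gQ)

lemma m_pos: "m > 0" using modd by (cases m) auto

lemma phi_carrier: "X \<in> SL2Z \<Longrightarrow> phi X \<in> carrier Q"
  using hom_phi by (auto simp: hom_def)

lemma phi_mmul: "X \<in> SL2Z \<Longrightarrow> Y \<in> SL2Z \<Longrightarrow> phi (mmul X Y) = phi X \<otimes>\<^bsub>Q\<^esub> phi Y"
  using group_hom.hom_mult[OF ghom, of X Y] by simp

lemma phi_minv: "X \<in> SL2Z \<Longrightarrow> phi (minv X) = inv\<^bsub>Q\<^esub> phi X"
  using group_hom.hom_inv[OF ghom, of X] by (simp add: inv_SLG)

lemma phi_pow: "X \<in> SL2Z \<Longrightarrow> phi (mpow X n) = phi X [^]\<^bsub>Q\<^esub> n"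
  using group_hom.hom_nat_pow[OF ghom, of X n] by (simp add: pow_SLG)

lemma phi_mI: "phi mI = \<one>\<^bsub>Q\<^esub>"
  using group_hom.hom_one[OF ghom] by simp

lemma one_Q: "\<one>\<^bsub>Q\<^esub> = Wm N m" by (simp add: Q_def)

lemma phi_one_iff: "X \<in> SL2Z \<Longrightarrow> (phi X = \<one>\<^bsub>Q\<^esub>) = (X \<in> Wm N m)"
proof
  assume X: "X \<in> SL2Z" and "phi X = \<one>\<^bsub>Q\<^esub>"
  then have "Wm N m #>\<^bsub>SLG\<^esub> X = Wm N m" by (simp add: phi_def one_Q)
  moreover have "X \<in> Wm N m #>\<^bsub>SLG\<^esub> X" using SLG.rcos_self[of X "Wm N m"] X subgroup_Wm by simp
  ultimately show "X \<in> Wm N m" by simp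
next
  assume X: "X \<in> SL2Z" and "X \<in> Wm N m"
  then show "phi X = \<one>\<^bsub>Q\<^esub>" using SLG.coset_join2[of X "Wm N m"] subgroup_Wm
    by (simp add: phi_def one_Q)
qed

lemma phi_W: "X \<in> SL2Z \<Longrightarrow> P \<in> PhiT N \<Longrightarrow> mred m X = mred m P \<Longrightarrow> phi X = \<one>\<^bsub>Q\<^esub>"
  using phi_one_iff by (auto simp: Wm_def)

lemma phi_eq:
  assumes X: "X \<in> SL2Z" and Y: "Y \<in> SL2Z" and e: "mred m X = mred m Y"
  shows "phi X = phi Y"
proof -
  define Z where "Z = mmul X (minv Y)"
  have dY: "mdet Y = 1" using Y by (simp add: SL2Z_def)
  have Z: "Z \<in> SL2Z" using X Y by (simp add: Z_def SL2Z_def mdet_mmul)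
  have "mred m Z = mred m (mmul Y (minv Y))" unfolding Z_def by (intro mred_cong_mmul e refl)
  then have "mred m Z = mred m mI" using minv_r[OF dY] by simp
  then have "phi Z = \<one>\<^bsub>Q\<^esub>" using phi_W[OF Z PhiT.one] by simp
  moreover have "mmul Z Y = X" using minv_l[OF dY] by (simp add: Z_def mmul_assoc)
  then have "phi X = phi Z \<otimes>\<^bsub>Q\<^esub> phi Y" using phi_mmul[OF Z Y] by simp
  ultimately show ?thesis using phi_carrier[OF Y] by simp
qed

definition alpha where "alpha = phi (u 1)"
definition beta where "beta = phi (l 1)"

lemma u_SL: "u t \<in> SL2Z" and l_SL: "l t \<in> SL2Z" by (simp_all add: SL2Z_def)

lemma alpha_c: "alpha \<in> carrier Q" and beta_c: "beta \<in> carrier Q"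
  by (simp_all add: alpha_def beta_def phi_carrier u_SL l_SL)

lemma phi_u_nat: "phi (u (int k)) = alpha [^]\<^bsub>Q\<^esub> k"
  using phi_pow[OF u_SL, of 1 k] by (simp add: mpow_u alpha_def)

lemma phi_l_nat: "phi (l (int k)) = beta [^]\<^bsub>Q\<^esub> k"
  using phi_pow[OF l_SL, of 1 k] by (simp add: mpow_l beta_def)

lemma phi_u: "phi (u t) = alpha [^]\<^bsub>Q\<^esub> nat (t mod int m)"
proof -
  have "phi (u t) = phi (u (t mod int m))" using mred_u[of m t] by (intro phi_eq u_SL) simp
  moreover have "t mod int m = int (nat (t mod int m))" using m_pos by simp
  ultimately show ?thesis using phi_u_nat by metis
qed

lemma phi_l: "phi (l t) = beta [^]\<^bsub>Q\<^esub> nat (t mod int m)"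
proof -
  have "phi (l t) = phi (l (t mod int m))" using mred_l[of m t] by (intro phi_eq l_SL) simp
  moreover have "t mod int m = int (nat (t mod int m))" using m_pos by simp
  ultimately show ?thesis using phi_l_nat by metis
qed

lemma alpha_m: "alpha [^]\<^bsub>Q\<^esub> m = \<one>\<^bsub>Q\<^esub>"
proof -
  have "phi (u (int m)) = phi mI" by (rule phi_eq) (auto simp: u_SL SL2Z_def u_def mI_def)
  then show ?thesis using phi_u_nat phi_mI by simp
qed

lemma beta_m: "beta [^]\<^bsub>Q\<^esub> m = \<one>\<^bsub>Q\<^esub>"
proof -
  have "phi (l (int m)) = phi mI" by (rule phi_eq) (auto simp: l_SL SL2Z_def l_def mI_def)
  then show ?thesis using phi_l_nat phi_mI by simp
qed

lemma phi_rel: "r \<in> relators N \<Longrightarrow> phi r = \<one>\<^bsub>Q\<^esub>"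
  using phi_W[OF _ relators_PhiT] relators_det by (auto simp: SL2Z_def)

lemma phi_A: "phi matA = alpha [^]\<^bsub>Q\<^esub> (2::nat)"
  using phi_u_nat[of 2] by (simp add: matA_u)

lemma phi_B: "phi matB = beta [^]\<^bsub>Q\<^esub> (2::nat)"
  using phi_l_nat[of 2] by (simp add: matB_l)

lemma phi_commut: "X \<in> SL2Z \<Longrightarrow> Y \<in> SL2Z \<Longrightarrow>
   phi (commut X Y) = phi X \<otimes>\<^bsub>Q\<^esub> phi Y \<otimes>\<^bsub>Q\<^esub> (inv\<^bsub>Q\<^esub> phi X \<otimes>\<^bsub>Q\<^esub> inv\<^bsub>Q\<^esub> phi Y)"
  unfolding commut_def
  by (simp add: phi_mmul phi_minv SL2Z_def mdet_mmul)

lemma A_SL: "matA \<in> SL2Z" and B_SL: "matB \<in> SL2Z" and z_SL: "commut matA matB \<in> SL2Z"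
  by (simp_all add: SL2Z_def mdet_commut)

lemma phi_lm1: "phi (l (-1)) = beta [^]\<^bsub>Q\<^esub> (m - 1)"
proof -
  have "(-1) mod int m = int m - 1"
    using m_pos by (simp add: zmod_minus1)
  then have "nat ((-1) mod int m) = m - 1" by simp
  then show ?thesis using phi_l[of "-1"] by simp
qed

lemma key:
  "alpha \<otimes>\<^bsub>Q\<^esub> beta = \<one>\<^bsub>Q\<^esub>" "alpha [^]\<^bsub>Q\<^esub> (3::nat) = \<one>\<^bsub>Q\<^esub>"
proof -
  define z where "z = phi (commut matA matB)"
  have zdef: "z = alpha [^]\<^bsub>Q\<^esub> (2::nat) \<otimes>\<^bsub>Q\<^esub> beta [^]\<^bsub>Q\<^esub> (2::nat) \<otimes>\<^bsub>Q\<^esub>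
      (inv\<^bsub>Q\<^esub> (alpha [^]\<^bsub>Q\<^esub> (2::nat)) \<otimes>\<^bsub>Q\<^esub> inv\<^bsub>Q\<^esub> (beta [^]\<^bsub>Q\<^esub> (2::nat)))"
    unfolding z_def using phi_commut[OF A_SL B_SL] phi_A phi_B by simp
  have za: "z \<otimes>\<^bsub>Q\<^esub> alpha [^]\<^bsub>Q\<^esub> (2::nat) \<otimes>\<^bsub>Q\<^esub> (inv\<^bsub>Q\<^esub> z \<otimes>\<^bsub>Q\<^esub> inv\<^bsub>Q\<^esub> (alpha [^]\<^bsub>Q\<^esub> (2::nat))) = \<one>\<^bsub>Q\<^esub>"
  proof -
    have "commut (commut matA matB) matA \<in> relators N" by (simp add: relators_def)
    then show ?thesis using phi_rel phi_commut[OF z_SL A_SL] phi_A by (simp add: z_def)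
  qed
  have zb: "z \<otimes>\<^bsub>Q\<^esub> beta [^]\<^bsub>Q\<^esub> (2::nat) \<otimes>\<^bsub>Q\<^esub> (inv\<^bsub>Q\<^esub> z \<otimes>\<^bsub>Q\<^esub> inv\<^bsub>Q\<^esub> (beta [^]\<^bsub>Q\<^esub> (2::nat))) = \<one>\<^bsub>Q\<^esub>"
  proof -
    have "commut (commut matA matB) matB \<in> relators N" by (simp add: relators_def)
    then show ?thesis using phi_rel phi_commut[OF z_SL B_SL] phi_B by (simp add: z_def)
  qed
  have braid: "alpha \<otimes>\<^bsub>Q\<^esub> beta [^]\<^bsub>Q\<^esub> (m - 1) \<otimes>\<^bsub>Q\<^esub> alpha
      = beta [^]\<^bsub>Q\<^esub> (m - 1) \<otimes>\<^bsub>Q\<^esub> alpha \<otimes>\<^bsub>Q\<^esub> beta [^]\<^bsub>Q\<^esub> (m - 1)"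
  proof -
    have e: "mmul (mmul (u 1) (l (-1))) (u 1) = mmul (mmul (l (-1)) (u 1)) (l (-1))"
      by (simp add: u_def l_def)
    have "phi (mmul (mmul (u 1) (l (-1))) (u 1)) = phi (mmul (mmul (l (-1)) (u 1)) (l (-1)))"
      by (simp only: e)
    then show ?thesis
      by (simp add: phi_mmul u_SL l_SL SL2Z_def mdet_mmul phi_lm1 alpha_def[symmetric])
  qed
  have cube: "alpha \<otimes>\<^bsub>Q\<^esub> beta [^]\<^bsub>Q\<^esub> (m - 1) \<otimes>\<^bsub>Q\<^esub> (alpha \<otimes>\<^bsub>Q\<^esub> beta [^]\<^bsub>Q\<^esub> (m - 1))
      \<otimes>\<^bsub>Q\<^esub> (alpha \<otimes>\<^bsub>Q\<^esub> beta [^]\<^bsub>Q\<^esub> (m - 1)) = \<one>\<^bsub>Q\<^esub>"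
  proof -
    define X where "X = mmul (u 1) (l (-1))"
    have XS: "X \<in> SL2Z" by (simp add: X_def SL2Z_def mdet_mmul)
    have e: "mmul (mmul X X) X = mneg mI" by (simp add: X_def u_def l_def mI_def)
    have "phi (mmul (mmul X X) X) = \<one>\<^bsub>Q\<^esub>"
      unfolding e by (rule phi_W[OF _ PhiT.negone]) (simp_all add: SL2Z_def mI_def)
    moreover have "phi X = alpha \<otimes>\<^bsub>Q\<^esub> beta [^]\<^bsub>Q\<^esub> (m - 1)"
      by (simp add: X_def phi_mmul u_SL l_SL phi_lm1 alpha_def)
    ultimately show ?thesis using XS by (simp add: phi_mmul SL2Z_def mdet_mmul)
  qed
  show "alpha \<otimes>\<^bsub>Q\<^esub> beta = \<one>\<^bsub>Q\<^esub>" "alpha [^]\<^bsub>Q\<^esub> (3::nat) = \<one>\<^bsub>Q\<^esub>"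
    using Qg.key_alg[OF alpha_c beta_c modd alpha_m beta_m zdef za zb braid cube] by auto
qed

lemma alpha_2N: "alpha [^]\<^bsub>Q\<^esub> (2 * N) = \<one>\<^bsub>Q\<^esub>"
proof -
  have "mpow matA N \<in> relators N" by (simp add: relators_def)
  then have "phi (mpow matA N) = \<one>\<^bsub>Q\<^esub>" by (rule phi_rel)
  then show ?thesis using phi_pow[OF A_SL, of N] phi_A alpha_c by (simp add: Qg.nat_pow_pow)
qed

lemma alpha_one: "\<not> (3 dvd N \<and> 3 dvd m) \<Longrightarrow> alpha = \<one>\<^bsub>Q\<^esub>"
proof -
  assume h: "\<not> (3 dvd N \<and> 3 dvd m)"
  show ?thesis
  proof (cases "3 dvd m")
    case False
    then show ?thesis using Qg.pow3_cases[OF alpha_c key(2) alpha_m] by simp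
  next
    case True
    then have "\<not> 3 dvd (2 * N)" using h by presburger
    then show ?thesis using Qg.pow3_cases[OF alpha_c key(2) alpha_2N] by simp
  qed
qed

lemma beta_alpha: "beta = alpha [^]\<^bsub>Q\<^esub> (2::nat)"
proof -
  have "beta \<otimes>\<^bsub>Q\<^esub> alpha = \<one>\<^bsub>Q\<^esub>" using Qg.inv_comm[OF key(1) alpha_c beta_c] .
  then have i1: "inv\<^bsub>Q\<^esub> alpha = beta" using Qg.inv_equality alpha_c beta_c by blast
  have "alpha [^]\<^bsub>Q\<^esub> (2::nat) \<otimes>\<^bsub>Q\<^esub> alpha = \<one>\<^bsub>Q\<^esub>"
    using key(2) alpha_c Qg.nat_pow_mult[of alpha 2 1] by simp
  then have "inv\<^bsub>Q\<^esub> alpha = alpha [^]\<^bsub>Q\<^esub> (2::nat)" using Qg.inv_equality alpha_c by simp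
  then show ?thesis using i1 by simp
qed

lemma Elem_phi: "E \<in> Elem \<Longrightarrow> \<exists>i::nat. phi E = alpha [^]\<^bsub>Q\<^esub> i"
proof (induction E rule: Elem.induct)
  case E0
  then show ?case using phi_mI by (intro exI[of _ 0]) simp
next
  case (Eu E t)
  then obtain i :: nat where i: "phi E = alpha [^]\<^bsub>Q\<^esub> i" by blast
  have ES: "E \<in> SL2Z" using Eu.hyps Elem_det by (simp add: SL2Z_def)
  have "phi (mmul (u t) E) = alpha [^]\<^bsub>Q\<^esub> (nat (t mod int m) + i)"
    using phi_mmul[OF u_SL ES] phi_u i alpha_c by (simp add: Qg.nat_pow_mult)
  then show ?case by blast
next
  case (El E t)
  then obtain i :: nat where i: "phi E = alpha [^]\<^bsub>Q\<^esub> i" by blast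
  have ES: "E \<in> SL2Z" using El.hyps Elem_det by (simp add: SL2Z_def)
  have "phi (mmul (l t) E) = alpha [^]\<^bsub>Q\<^esub> (2 * nat (t mod int m) + i)"
    using phi_mmul[OF l_SL ES] phi_l i alpha_c beta_alpha by (simp add: Qg.nat_pow_mult Qg.nat_pow_pow)
  then show ?case by blast
qed

lemma main_m:
  assumes det: "int m dvd (mdet Y - 1)"
    and cond: "\<not> (3 dvd N \<and> 3 dvd m) \<or> mred 3 Y \<in> D3"
  shows "\<exists>P\<in>PhiT N. mred m Y = mred m P"
proof -
  obtain E where E: "E \<in> Elem" "mred m E = mred m Y" using gen_Elem[OF m_pos det] by blast
  have ES: "E \<in> SL2Z" using E(1) Elem_det by (simp add: SL2Z_def)
  obtain i :: nat where i: "phi E = alpha [^]\<^bsub>Q\<^esub> i" using Elem_phi[OF E(1)] by blast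
  have "phi E = \<one>\<^bsub>Q\<^esub>"
  proof (cases "3 dvd N \<and> 3 dvd m")
    case False
    then show ?thesis using i alpha_one by simp
  next
    case True
    then have Y3: "mred 3 Y \<in> D3" using cond by simp
    have E3: "mred 3 E \<in> D3"
    proof -
      have "mred 3 E = mred 3 (mred m E)" using True by (simp add: mred_dvd)
      also have "\<dots> = mred 3 (mred m Y)" using E(2) by simp
      also have "\<dots> = mred 3 Y" using True by (simp add: mred_dvd)
      finally show ?thesis using Y3 by simp
    qed
    have ir: "phi E = alpha [^]\<^bsub>Q\<^esub> (i mod 3)"
    proof -
      have "alpha [^]\<^bsub>Q\<^esub> i = alpha [^]\<^bsub>Q\<^esub> (3 * (i div 3)) \<otimes>\<^bsub>Q\<^esub> alpha [^]\<^bsub>Q\<^esub> (i mod 3)"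
        using alpha_c by (simp add: Qg.nat_pow_mult)
      also have "alpha [^]\<^bsub>Q\<^esub> (3 * (i div 3)) = (alpha [^]\<^bsub>Q\<^esub> (3::nat)) [^]\<^bsub>Q\<^esub> (i div 3)"
        using alpha_c by (rule Qg.nat_pow_pow[symmetric])
      finally show ?thesis using i key(2) alpha_c by simp
    qed
    show ?thesis
    proof (rule ccontr)
      assume ne: "phi E \<noteq> \<one>\<^bsub>Q\<^esub>"
      define r where "r = i mod 3"
      have "r < 3" by (simp add: r_def)
      moreover have "r \<noteq> 0"
      proof
        assume "r = 0"
        then have "phi E = alpha [^]\<^bsub>Q\<^esub> (0::nat)" using ir by (simp add: r_def)
        then show False using ne by simp
      qed
      ultimately have r12: "int r \<in> {1,2}" by auto
      define Z where "Z = mmul E (u (- int r))"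
      have ZS: "Z \<in> SL2Z" using ES by (simp add: Z_def SL2Z_def mdet_mmul)
      have pu: "phi (u (- int r)) = inv\<^bsub>Q\<^esub> (alpha [^]\<^bsub>Q\<^esub> r)"
      proof -
        have "phi (u (- int r)) = phi (minv (u (int r)))" by (simp add: minv_u)
        also have "\<dots> = inv\<^bsub>Q\<^esub> (phi (u (int r)))" by (rule phi_minv[OF u_SL])
        finally show ?thesis by (simp only: phi_u_nat)
      qed
      have "phi Z = phi E \<otimes>\<^bsub>Q\<^esub> phi (u (- int r))" unfolding Z_def by (rule phi_mmul[OF ES u_SL])
      also have "\<dots> = alpha [^]\<^bsub>Q\<^esub> r \<otimes>\<^bsub>Q\<^esub> inv\<^bsub>Q\<^esub> (alpha [^]\<^bsub>Q\<^esub> r)"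
        using ir pu by (simp add: r_def)
      also have "\<dots> = \<one>\<^bsub>Q\<^esub>" using alpha_c by simp
      finally have "phi Z = \<one>\<^bsub>Q\<^esub>" .
      then have "Z \<in> Wm N m" using phi_one_iff[OF ZS] by simp
      then obtain P where P: "P \<in> PhiT N" "mred m Z = mred m P" by (auto simp: Wm_def)
      have m3: "3 dvd m" using True by simp
      have "mred 3 Z = mred 3 (mred m Z)" using m3 by (simp add: mred_dvd)
      also have "\<dots> = mred 3 (mred m P)" using P(2) by simp
      also have "\<dots> = mred 3 P" using m3 by (simp add: mred_dvd)
      finally have "mred 3 Z = mred 3 P" .
      then have "mred 3 Z \<in> D3" using PhiT_mod3[OF P(1)] True by simp
      then show False using D3_not_u'[OF E3 r12] by (simp add: Z_def)
    qed
  qed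
  then have "E \<in> Wm N m" using phi_one_iff[OF ES] by simp
  then obtain P where "P \<in> PhiT N" "mred m E = mred m P" by (auto simp: Wm_def)
  then show ?thesis using E(2) by auto
qed

end

lemma mdet_mred_mod: "mdet (mred m Y) mod int m = mdet Y mod int m"
proof -
  obtain a b c d where Y: "Y = (a,b,c,d)" by (cases Y)
  have "((a mod int m)*(d mod int m) - (b mod int m)*(c mod int m)) mod int m
      = (((a mod int m)*(d mod int m)) mod int m - ((b mod int m)*(c mod int m)) mod int m) mod int m"
    by (rule mod_diff_eq[symmetric])
  also have "\<dots> = ((a*d) mod int m - (b*c) mod int m) mod int m" by (simp only: mod_mult_eq)
  also have "\<dots> = (a*d - b*c) mod int m" by (rule mod_diff_eq)
  finally show ?thesis using Y by simp
qed

lemma det_cond_mred: "(mdet (mred m Y) - 1) mod int m = (mdet Y - 1) mod int m"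
proof -
  have "(mdet (mred m Y) - 1) mod int m = (mdet (mred m Y) mod int m - 1) mod int m"
    by (simp add: mod_diff_left_eq)
  also have "\<dots> = (mdet Y mod int m - 1) mod int m" by (simp only: mdet_mred_mod)
  also have "\<dots> = (mdet Y - 1) mod int m" by (simp add: mod_diff_left_eq)
  finally show ?thesis .
qed

lemma mneg_mneg [simp]: "mneg (mneg X) = X" by (cases X) simp

lemma SLhat_odd:
  assumes "G \<in> SLhat" "odd m"
  shows "mred m (G m) = G m" "(mdet (G m) - 1) mod int m = 0" "d dvd m \<Longrightarrow> mred d (G m) = G d"
  using assms by (auto simp: SLhat_def)

lemma SLhat_even: "G \<in> SLhat \<Longrightarrow> even m \<Longrightarrow> G m = (0,0,0,0)"
  by (auto simp: SLhat_def)

lemma negHat_odd: "odd m \<Longrightarrow> negHat G m = mred m (mneg (G m))"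
  by (simp add: negHat_def)

lemma negHat_SLhat:
  assumes G: "G \<in> SLhat"
  shows "negHat G \<in> SLhat"
proof -
  have a: "mred m (negHat G m) = negHat G m" if m: "odd m" for m
    using m by (simp add: negHat_def)
  have b: "(mdet (negHat G m) - 1) mod int m = 0" if m: "odd m" for m
  proof -
    have "(mdet (negHat G m) - 1) mod int m = (mdet (mneg (G m)) - 1) mod int m"
      using m by (simp add: negHat_def det_cond_mred)
    then show ?thesis using SLhat_odd(2)[OF G m] by simp
  qed
  have c: "mred d (negHat G m) = negHat G d" if m: "odd m" and d: "d dvd m" for m d
  proof -
    have dodd: "odd d" using m d by (auto dest: dvd_trans)
    have "mred d (negHat G m) = mred d (mneg (G m))" using m d by (simp add: negHat_def mred_dvd)
    also have "\<dots> = mred d (mneg (mred d (G m)))" by (rule mred_mneg)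
    also have "\<dots> = mred d (mneg (G d))" using SLhat_odd(3)[OF G m d] by simp
    also have "\<dots> = negHat G d" using dodd by (simp add: negHat_def)
    finally show ?thesis .
  qed
  have e: "negHat G m = (0,0,0,0)" if "even m" for m
    using that SLhat_even[OF G] by (simp add: negHat_def)
  show ?thesis unfolding SLhat_def using a b c e by blast
qed

lemma negHat_negHat:
  assumes G: "G \<in> SLhat"
  shows "negHat (negHat G) = G"
proof
  fix m :: nat
  show "negHat (negHat G) m = G m"
  proof (cases "odd m")
    case True
    have "negHat (negHat G) m = mred m (mneg (mred m (mneg (G m))))" using True by (simp add: negHat_def)
    also have "\<dots> = mred m (G m)" using mred_mneg[of m "mneg (G m)"] by simp
    also have "\<dots> = G m" using SLhat_odd(1)[OF G True] .
    finally show ?thesis .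
  next
    case False
    then show ?thesis by (simp add: negHat_def)
  qed
qed

lemma pslhat_negHat: "G \<in> SLhat \<Longrightarrow> pslhat_of (negHat G) = pslhat_of G"
  by (auto simp: pslhat_of_def negHat_negHat)

lemma pslhat_rep:
  assumes "X \<in> PSLhat" "G \<in> X"
  shows "G \<in> SLhat \<and> X = pslhat_of G"
proof -
  obtain G0 where G0: "G0 \<in> SLhat" "X = pslhat_of G0" using assms(1) by (auto simp: PSLhat_def)
  then have "G = G0 \<or> G = negHat G0" using assms(2) by (auto simp: pslhat_of_def)
  then show ?thesis using G0 negHat_SLhat pslhat_negHat by auto
qed

lemma iota_SLhat:
  assumes "mdet M = 1"
  shows "iota M \<in> SLhat"
proof -
  have a: "mred m (iota M m) = iota M m" if m: "odd m" for m
    using m by (simp add: iota_def)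
  have b: "(mdet (iota M m) - 1) mod int m = 0" if m: "odd m" for m
    using m assms by (simp add: iota_def det_cond_mred)
  have c: "mred d (iota M m) = iota M d" if m: "odd m" and d: "d dvd m" for m d
  proof -
    have "odd d" using m d by (auto dest: dvd_trans)
    then show ?thesis using m d by (simp add: iota_def mred_dvd)
  qed
  have e: "iota M m = (0,0,0,0)" if "even m" for m
    using that by (simp add: iota_def)
  show ?thesis unfolding SLhat_def using a b c e by blast
qed

lemma negHat_iota: "negHat (iota M) = iota (mneg M)"
proof
  fix m
  show "negHat (iota M) m = iota (mneg M) m"
    by (cases "odd m") (simp_all add: negHat_def iota_def mred_mneg[of m M, symmetric])
qed

lemma psl_embed_class: "psl_embed (psl_class M) = pslhat_of (iota M)"
  by (simp add: psl_embed_def psl_class_def pslhat_of_def negHat_iota)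

lemma S_eq: "psl_embed ` PhiPrime N = (\<lambda>P. pslhat_of (iota P)) ` PhiT N"
  by (auto simp: PhiPrime_def psl_embed_class image_image)

lemma S_sub: "psl_embed ` PhiPrime N \<subseteq> PSLhat"
  unfolding S_eq PSLhat_def using iota_SLhat PhiT_det by blast


abbreviation Prod :: "(nat \<Rightarrow> mat) topology" where
  "Prod \<equiv> product_topology (\<lambda>m. discrete_topology UNIV) UNIV"

lemma topspace_Prod: "topspace Prod = UNIV"
  by (simp add: PiE_UNIV_domain)

lemma topspace_SLhat: "topspace SLhat_top = SLhat"
  by (simp add: SLhat_top_def topspace_Prod)

lemma istop_PSL: "istopology (\<lambda>U. U \<subseteq> PSLhat \<and> openin SLhat_top {G \<in> SLhat. pslhat_of G \<in> U})"
proof -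
  have i: "openin SLhat_top {G \<in> SLhat. pslhat_of G \<in> S \<inter> T}"
    if "openin SLhat_top {G \<in> SLhat. pslhat_of G \<in> S}" "openin SLhat_top {G \<in> SLhat. pslhat_of G \<in> T}" for S T
  proof -
    have "{G \<in> SLhat. pslhat_of G \<in> S \<inter> T} = {G \<in> SLhat. pslhat_of G \<in> S} \<inter> {G \<in> SLhat. pslhat_of G \<in> T}"
      by auto
    then show ?thesis using that by (simp add: openin_Int)
  qed
  have u: "openin SLhat_top {G \<in> SLhat. pslhat_of G \<in> \<Union>K}"
    if "\<forall>U\<in>K. openin SLhat_top {G \<in> SLhat. pslhat_of G \<in> U}" for K
  proof -
    have "{G \<in> SLhat. pslhat_of G \<in> \<Union>K} = \<Union>((\<lambda>U. {G \<in> SLhat. pslhat_of G \<in> U}) ` K)" by auto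
    moreover have "openin SLhat_top (\<Union>((\<lambda>U. {G \<in> SLhat. pslhat_of G \<in> U}) ` K))"
      using that by (intro openin_Union) auto
    ultimately show ?thesis by simp
  qed
  show ?thesis unfolding istopology_def
    apply (intro conjI allI impI)
       apply blast
      using i apply blast
     apply blast
    using u apply blast
    done
qed

lemma openin_PSL: "openin PSLhat_top U \<longleftrightarrow> U \<subseteq> PSLhat \<and> openin SLhat_top {G \<in> SLhat. pslhat_of G \<in> U}"
  unfolding PSLhat_top_def using topology_inverse'[OF istop_PSL] by simp

lemma topspace_PSL: "topspace PSLhat_top = PSLhat"
proof -
  have "{G \<in> SLhat. pslhat_of G \<in> PSLhat} = SLhat" by (auto simp: PSLhat_def)
  then have "openin PSLhat_top PSLhat"
    unfolding openin_PSL using openin_topspace[of SLhat_top] by (simp add: topspace_SLhat)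
  then have "PSLhat \<subseteq> topspace PSLhat_top" by (rule openin_subset)
  moreover have "topspace PSLhat_top \<subseteq> PSLhat"
    using openin_topspace[of PSLhat_top] unfolding openin_PSL by blast
  ultimately show ?thesis by blast
qed

lemma coord_open: "openin SLhat_top {G \<in> SLhat. G m \<in> A}"
proof -
  have "openin Prod {x \<in> topspace Prod. x m \<in> A}"
    by (rule openin_continuous_map_preimage[OF continuous_map_product_projection]) auto
  then have "openin Prod {x. x m \<in> A}" by (simp add: topspace_Prod)
  moreover have "{G \<in> SLhat. G m \<in> A} = {x. x m \<in> A} \<inter> SLhat" by auto
  ultimately show ?thesis unfolding SLhat_top_def openin_subtopology by blast
qed

lemma basic_nbhd:
  assumes V: "openin SLhat_top V" and G0: "G0 \<in> V"
  shows "\<exists>m. odd m \<and> (\<forall>H\<in>SLhat. H m = G0 m \<longrightarrow> H \<in> V)"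
proof -
  obtain T where T: "openin Prod T" "V = T \<inter> SLhat" using V unfolding SLhat_top_def openin_subtopology by blast
  have G0T: "G0 \<in> T" and G0S: "G0 \<in> SLhat" using G0 T by auto
  obtain U where U: "finite {i \<in> UNIV. U i \<noteq> UNIV}" "G0 \<in> Pi\<^sub>E UNIV U" "Pi\<^sub>E UNIV U \<subseteq> T"
    using T(1) G0T unfolding openin_product_topology_alt by auto
  define F where "F = {i. U i \<noteq> UNIV \<and> odd i}"
  have finF: "finite F" using U(1) unfolding F_def by (rule rev_finite_subset) auto
  define m where "m = prod id F"
  have modd: "odd m" unfolding m_def using finF by (simp add: even_prod_iff F_def)
  have "H \<in> V" if H: "H \<in> SLhat" "H m = G0 m" for H
  proof -
    have "H i \<in> U i" for i
    proof (cases "U i = UNIV")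
      case True then show ?thesis by simp
    next
      case False
      have G0i: "G0 i \<in> U i" using U(2) by auto
      show ?thesis
      proof (cases "odd i")
        case True
        then have "i \<in> F" using False by (simp add: F_def)
        then have "i dvd m" unfolding m_def using finF by (metis dvd_prodI id_apply)
        then have "H i = G0 i" using SLhat_odd(3)[OF H(1) modd] SLhat_odd(3)[OF G0S modd] H(2) by metis
        then show ?thesis using G0i by simp
      next
        case False
        then have "H i = G0 i" using SLhat_even[OF H(1)] SLhat_even[OF G0S] by simp
        then show ?thesis using G0i by simp
      qed
    qed
    then have "H \<in> Pi\<^sub>E UNIV U" by (simp add: PiE_UNIV_domain)
    then show ?thesis using U(3) T(2) H(1) by auto
  qed
  then show ?thesis using modd by blast
qed

lemma closure_char:
  assumes S: "S \<subseteq> PSLhat"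
  shows "X \<in> Abstract_Topology.closure_of PSLhat_top S \<longleftrightarrow>
    X \<in> PSLhat \<and> (\<forall>m. odd m \<longrightarrow> (\<exists>Y\<in>S. \<exists>G\<in>X. \<exists>H\<in>Y. G m = H m))"
proof
  assume X: "X \<in> Abstract_Topology.closure_of PSLhat_top S"
  then have XP: "X \<in> PSLhat" by (simp add: in_closure_of topspace_PSL)
  have Xcl: "\<forall>T. X \<in> T \<and> openin PSLhat_top T \<longrightarrow> (\<exists>y. y \<in> S \<and> y \<in> T)"
    using X by (simp add: in_closure_of)
  show "X \<in> PSLhat \<and> (\<forall>m. odd m \<longrightarrow> (\<exists>Y\<in>S. \<exists>G\<in>X. \<exists>H\<in>Y. G m = H m))"
  proof (intro conjI allI impI XP)
    fix m :: nat assume m: "odd m"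
    define Tm where "Tm = {Z \<in> PSLhat. \<exists>G\<in>X. \<exists>H\<in>Z. G m = H m}"
    define A where "A = {x. \<exists>G\<in>X. G m = x \<or> G m = mred m (mneg x)}"
    have "pslhat_of G \<in> Tm \<longleftrightarrow> G m \<in> A" if G: "G \<in> SLhat" for G
    proof -
      have "pslhat_of G \<in> PSLhat" using G by (simp add: PSLhat_def)
      then have "pslhat_of G \<in> Tm \<longleftrightarrow> (\<exists>G'\<in>X. G' m = G m \<or> G' m = negHat G m)"
        by (simp add: Tm_def pslhat_of_def)
      also have "\<dots> \<longleftrightarrow> G m \<in> A" using m by (simp add: A_def negHat_odd)
      finally show ?thesis .
    qed
    then have "{G \<in> SLhat. pslhat_of G \<in> Tm} = {G \<in> SLhat. G m \<in> A}" by blast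
    then have "openin PSLhat_top Tm" unfolding openin_PSL using coord_open by (simp add: Tm_def)
    moreover have "X \<in> Tm"
    proof -
      obtain G0 where "G0 \<in> SLhat" "X = pslhat_of G0" using XP by (auto simp: PSLhat_def)
      then show ?thesis using XP by (auto simp: Tm_def pslhat_of_def)
    qed
    ultimately obtain Y where "Y \<in> S" "Y \<in> Tm" using Xcl by blast
    then show "\<exists>Y\<in>S. \<exists>G\<in>X. \<exists>H\<in>Y. G m = H m" by (auto simp: Tm_def)
  qed
next
  assume h: "X \<in> PSLhat \<and> (\<forall>m. odd m \<longrightarrow> (\<exists>Y\<in>S. \<exists>G\<in>X. \<exists>H\<in>Y. G m = H m))"
  then have XP: "X \<in> PSLhat" by simp
  obtain G0 where G0: "G0 \<in> SLhat" "X = pslhat_of G0" using XP by (auto simp: PSLhat_def)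
  show "X \<in> Abstract_Topology.closure_of PSLhat_top S"
    unfolding in_closure_of topspace_PSL
  proof (intro conjI allI impI XP)
    fix T assume T: "X \<in> T \<and> openin PSLhat_top T"
    define V where "V = {G \<in> SLhat. pslhat_of G \<in> T}"
    have V: "openin SLhat_top V" using T unfolding openin_PSL V_def by simp
    have "G0 \<in> V" using G0 T by (simp add: V_def)
    then obtain m where m: "odd m" "\<forall>H\<in>SLhat. H m = G0 m \<longrightarrow> H \<in> V"
      using basic_nbhd[OF V] by blast
    then obtain Y G H where YGH: "Y \<in> S" "G \<in> X" "H \<in> Y" "G m = H m" using h by blast
    have YP: "Y \<in> PSLhat" using YGH(1) S by blast
    have H: "H \<in> SLhat" "Y = pslhat_of H" using pslhat_rep[OF YP YGH(3)] by auto
    have "G = G0 \<or> G = negHat G0" using YGH(2) G0(2) by (auto simp: pslhat_of_def)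
    then show "\<exists>y. y \<in> S \<and> y \<in> T"
    proof
      assume "G = G0"
      then have "H \<in> V" using m(2) H(1) YGH(4) by simp
      then show ?thesis using H(2) YGH(1) by (auto simp: V_def)
    next
      assume GG: "G = negHat G0"
      have "negHat H m = G0 m"
      proof -
        have "negHat H m = mred m (mneg (H m))" using m(1) by (simp add: negHat_odd)
        also have "\<dots> = mred m (mneg (negHat G0 m))" using YGH(4) GG by simp
        also have "\<dots> = negHat (negHat G0) m" using m(1) by (simp add: negHat_odd)
        also have "\<dots> = G0 m" using negHat_negHat[OF G0(1)] by simp
        finally show ?thesis .
      qed
      then have "negHat H \<in> V" using m(2) negHat_SLhat[OF H(1)] by simp
      then have "pslhat_of (negHat H) \<in> T" by (simp add: V_def)
      then show ?thesis using H pslhat_negHat YGH(1) by auto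
    qed
  qed
qed

lemma approx:
  assumes G: "G \<in> SLhat" and D: "3 dvd N \<longrightarrow> G 3 \<in> D3" and m: "odd m"
  shows "\<exists>Y\<in>psl_embed ` PhiPrime N. \<exists>G'\<in>pslhat_of G. \<exists>H\<in>Y. G' m = H m"
proof -
  interpret QC N m by unfold_locales (rule m)
  have det: "int m dvd (mdet (G m) - 1)" using SLhat_odd(2)[OF G m] by (simp add: dvd_eq_mod_eq_0)
  have cond: "\<not> (3 dvd N \<and> 3 dvd m) \<or> mred 3 (G m) \<in> D3"
  proof (cases "3 dvd N \<and> 3 dvd m")
    case True
    then have "mred 3 (G m) = G 3" using SLhat_odd(3)[OF G m] by simp
    then show ?thesis using D True by simp
  qed simp
  obtain P where P: "P \<in> PhiT N" "mred m (G m) = mred m P" using main_m[OF det cond] by blast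
  have "iota P m = G m" using P(2) SLhat_odd(1)[OF G m] m by (simp add: iota_def)
  moreover have "pslhat_of (iota P) \<in> psl_embed ` PhiPrime N" using P(1) by (simp add: S_eq)
  moreover have "iota P \<in> pslhat_of (iota P)" by (simp add: pslhat_of_def)
  moreover have "G \<in> pslhat_of G" by (simp add: pslhat_of_def)
  ultimately show ?thesis by metis
qed

lemma closure_D3:
  assumes "3 dvd N" "X \<in> Abstract_Topology.closure_of PSLhat_top (psl_embed ` PhiPrime N)"
  shows "X \<in> Dhat_odd"
proof -
  have h: "X \<in> PSLhat \<and> (\<forall>m. odd m \<longrightarrow> (\<exists>Y\<in>psl_embed ` PhiPrime N. \<exists>G\<in>X. \<exists>H\<in>Y. G m = H m))"
    using assms(2) closure_char[OF S_sub] by blast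
  then obtain Y G H where YGH: "Y \<in> psl_embed ` PhiPrime N" "G \<in> X" "H \<in> Y" "G 3 = H 3"
    by (meson odd_numeral)
  obtain P where P: "P \<in> PhiT N" "Y = pslhat_of (iota P)" using YGH(1) by (auto simp: S_eq)
  have P3: "mred 3 P \<in> D3" using PhiT_mod3[OF P(1) assms(1)] .
  have "H = iota P \<or> H = iota (mneg P)" using YGH(3) P(2) by (auto simp: pslhat_of_def negHat_iota)
  then have "H 3 \<in> D3"
  proof
    assume "H = iota P" then show ?thesis using P3 by (simp add: iota_def)
  next
    assume "H = iota (mneg P)"
    then have "H 3 = mred 3 (mneg (mred 3 P))" by (simp add: iota_def mred_mneg[of 3 P, symmetric])
    then show ?thesis using D3_mneg[OF P3] by simp
  qed
  then have "G 3 \<in> D3" using YGH(4) by simp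
  then show ?thesis unfolding Dhat_odd_def using h YGH(2) by blast
qed

theorem proposition15:
  fixes N :: nat
  assumes "N \<ge> 1"
  shows "(\<not> 3 dvd N \<longrightarrow> PSLhat_top closure_of (psl_embed ` PhiPrime N) = PSLhat)
       \<and> (3 dvd N \<longrightarrow> PSLhat_top closure_of (psl_embed ` PhiPrime N) = Dhat_odd)"
proof (intro conjI impI)
  have sub: "Abstract_Topology.closure_of PSLhat_top (psl_embed ` PhiPrime N) \<subseteq> PSLhat"
    using closure_char[OF S_sub] by blast
  have sup: "X \<in> Abstract_Topology.closure_of PSLhat_top (psl_embed ` PhiPrime N)"
    if X: "X \<in> PSLhat" and G: "G \<in> X" and D: "3 dvd N \<longrightarrow> G 3 \<in> D3" for X G
  proof -
    have G': "G \<in> SLhat" "X = pslhat_of G" using pslhat_rep[OF X G] by auto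
    show ?thesis unfolding closure_char[OF S_sub] using X approx[OF G'(1) D] G'(2) by blast
  qed
  {
    assume n3: "\<not> 3 dvd N"
    have "PSLhat \<subseteq> Abstract_Topology.closure_of PSLhat_top (psl_embed ` PhiPrime N)"
    proof
      fix X assume X: "X \<in> PSLhat"
      then obtain G0 where "X = pslhat_of G0" by (auto simp: PSLhat_def)
      then have "G0 \<in> X" by (simp add: pslhat_of_def)
      then show "X \<in> Abstract_Topology.closure_of PSLhat_top (psl_embed ` PhiPrime N)"
        using sup[OF X] n3 by blast
    qed
    then show "Abstract_Topology.closure_of PSLhat_top (psl_embed ` PhiPrime N) = PSLhat"
      using sub by blast
  }
  {
    assume n3: "3 dvd N"
    have "Dhat_odd \<subseteq> Abstract_Topology.closure_of PSLhat_top (psl_embed ` PhiPrime N)"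
    proof
      fix X assume "X \<in> Dhat_odd"
      then obtain G where "X \<in> PSLhat" "G \<in> X" "G 3 \<in> D3" by (auto simp: Dhat_odd_def)
      then show "X \<in> Abstract_Topology.closure_of PSLhat_top (psl_embed ` PhiPrime N)"
        using sup by blast
    qed
    moreover have "Abstract_Topology.closure_of PSLhat_top (psl_embed ` PhiPrime N) \<subseteq> Dhat_odd"
      using closure_D3[OF n3] by blast
    ultimately show "Abstract_Topology.closure_of PSLhat_top (psl_embed ` PhiPrime N) = Dhat_odd" by blast
  }
qed

end
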